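(* In the setting below, for every $k\ge0$ (within the range where the maps are defined) one has $\operatorname{gen\text{-}rk}_{\mathbb C}(\Gamma_{k+2})=m+\operatorname{gen\text{-}rk}_{\mathbb C}(\psi^{k+1})$. Hence $\operatorname{gen\text{-}rk}_{\mathbb C}(\psi^{k+1})=m+e_1+\cdots+e_k$ for $0\le k\le\kappa_p$ and $\operatorname{gen\text{-}rk}_{\mathbb C}(\psi^{k+1})=m+e_1+\cdots+e_{\kappa_p}$ for $k\ge\kappa_p$. The same statements hold with $\underline\Gamma_{k+2}$ and $\underline\psi^{k+1}$ in place of $\Gamma_{k+2}$ and $\psi^{k+1}$.
   Context: Setting: $M\subset\mathbb C^n$ is a real analytic CR-generic submanifold, $p\in M$, $m=\dim_{CR}M\ge1$, $d=\operatorname{codim}_{\mathbb R}M\ge1$, $n=m+d$. Local holomorphic coordinates $t=(w,z)\in\mathbb C^m\times\mathbb C^d$ vanish at $p$ and $M$ is given near $0$ by $z=\bar z+i\bar\Theta(w,\bar w,\bar z)$, equivalently $\bar z=z-i\Theta(\bar w,w,z)$, with $\Theta$ a $\mathbb C^d$-valued convergent power series ($\bar\Theta$: conjugated coefficients). Extrinsic complexification: $\mathcal M=\{(t,\tau)=(w,z,\zeta,\xi)\ \text{near }0: z=\xi+i\bar\Theta(w,\zeta,\xi)\}$; $p^c=(p,\bar p)$; $\pi_t(t,\tau)=t$, $\pi_\tau(t,\tau)=\tau$. $m$-flows on $\mathcal M$: $\mathcal L_w(w_0,z_0,\zeta_0,\xi_0)=(w_0+w,\xi_0+i\bar\Theta(w_0+w,\zeta_0,\xi_0),\zeta_0,\xi_0)$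 and $\underline{\mathcal L}_\zeta(w_0,z_0,\zeta_0,\xi_0)=(w_0,z_0,\zeta_0+\zeta,z_0-i\Theta(\zeta_0+\zeta,w_0,z_0))$. Segre $k$-chains: $\Gamma_1(w_1)=\mathcal L_{w_1}(p^c)$, $\Gamma_2=\underline{\mathcal L}_{w_2}(\Gamma_1)$, $\Gamma_3=\mathcal L_{w_3}(\Gamma_2)$, etc., alternating; $\underline\Gamma_k$ likewise starting with $\underline{\mathcal L}_{w_1}(p^c)$. Projected maps: $\psi^{2j}:=\pi_\tau\circ\Gamma_{2j}$, $\psi^{2j+1}:=\pi_t\circ\Gamma_{2j+1}$, $\underline\psi^{2j}:=\pi_t\circ\underline\Gamma_{2j}$, $\underline\psi^{2j+1}:=\pi_\tau\circ\underline\Gamma_{2j+1}$. $\operatorname{gen\text{-}rk}_{\mathbb C}$ denotes generic (maximal) rank. Segre multitype: $r_k$ generic rank of $\Gamma_k$, $e_k:=r_{k+2}-r_{k+1}$, $\kappa_p$ the integer with $e_1,\dots,e_{\kappa_p}>0$ and $e_l=0$ for $l>\kappa_p$. *)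

theory Defs
  imports "HOL-Analysis.Analysis"
begin

text \<open>Points of C^n = C^m x C^d are pairs t = (w,z); points of C^n x C^n (the
extrinsic complexification lives there) are pairs (t,tau) = ((w,z),(zeta,xi)).\<close>

type_synonym ('m,'d) cpt = "(complex^'m) \<times> (complex^'d)"
type_synonym ('m,'d) cpt2 = "('m,'d) cpt \<times> ('m,'d) cpt"

definition cj :: "complex^'n \<Rightarrow> complex^'n" where
  "cj v = (\<chi> i. cnj (v $ i))"

text \<open>Theta-bar: the power series with conjugated coefficients.\<close>
definition Theta_bar ::
  "(complex^'m \<Rightarrow> complex^'m \<Rightarrow> complex^'d \<Rightarrow> complex^'d)
   \<Rightarrow> complex^'m \<Rightarrow> complex^'m \<Rightarrow> complex^'d \<Rightarrow> complex^'d" where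
  "Theta_bar \<Theta> a b c = cj (\<Theta> (cj a) (cj b) (cj c))"

text \<open>Flattening into coordinate vectors (to speak about Jacobians/ranks).\<close>
definition flat3 :: "(complex^'m) \<times> (complex^'m) \<times> (complex^'d) \<Rightarrow> complex^(('m+'m)+'d)" where
  "flat3 x = (\<chi> s. case s of Inl (Inl i) \<Rightarrow> fst x $ i | Inl (Inr i) \<Rightarrow> fst (snd x) $ i
                          | Inr j \<Rightarrow> snd (snd x) $ j)"

definition flat_t :: "('m::finite,'d::finite) cpt \<Rightarrow> complex^('m+'d)" where
  "flat_t t = (\<chi> s. case s of Inl i \<Rightarrow> fst t $ i | Inr j \<Rightarrow> snd t $ j)"

definition flat_pt :: "('m::finite,'d::finite) cpt2 \<Rightarrow> complex^(('m+'d)+('m+'d))" where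
  "flat_pt p = (\<chi> s. case s of Inl a \<Rightarrow> flat_t (fst p) $ a | Inr b \<Rightarrow> flat_t (snd p) $ b)"

text \<open>For functions of several complex variables this is equivalent to being given by
convergent power series.\<close>
definition holomorphic_near_0 ::
  "(complex^'m \<Rightarrow> complex^'m \<Rightarrow> complex^'d \<Rightarrow> complex^'d) \<Rightarrow> bool" where
  "holomorphic_near_0 \<Theta> \<longleftrightarrow>
     (\<exists>U. open U \<and> (0::complex^(('m+'m)+'d)) \<in> U \<and>
        (\<forall>x. flat3 x \<in> U \<longrightarrow>
           (\<exists>A::complex^(('m+'m)+'d)^'d.
              ((\<lambda>y. \<Theta> (fst y) (fst (snd y)) (snd (snd y))) has_derivative
                 (\<lambda>h. A *v flat3 h)) (at x))))"

definition Lflow :: "(complex^'m \<Rightarrow> complex^'m \<Rightarrow> complex^'d \<Rightarrow> complex^'d)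
   \<Rightarrow> complex^'m \<Rightarrow> ('m::finite,'d::finite) cpt2 \<Rightarrow> ('m::finite,'d::finite) cpt2" where
  "Lflow \<Theta> w p = (case p of ((w0,z0),(\<zeta>0,\<xi>0)) \<Rightarrow>
      ((w0 + w, \<xi>0 + \<i> *s Theta_bar \<Theta> (w0 + w) \<zeta>0 \<xi>0), (\<zeta>0, \<xi>0)))"

definition Lbarflow :: "(complex^'m \<Rightarrow> complex^'m \<Rightarrow> complex^'d \<Rightarrow> complex^'d)
   \<Rightarrow> complex^'m \<Rightarrow> ('m::finite,'d::finite) cpt2 \<Rightarrow> ('m::finite,'d::finite) cpt2" where
  "Lbarflow \<Theta> \<zeta> p = (case p of ((w0,z0),(\<zeta>0,\<xi>0)) \<Rightarrow>
      ((w0, z0), (\<zeta>0 + \<zeta>, z0 - \<i> *s \<Theta> (\<zeta>0 + \<zeta>) w0 z0)))"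

text \<open>Segre k-chains Gamma_k (first flow L) and underline-Gamma_k (first flow
underline-L), as functions of the parameters ws 1, ..., ws k; p^c is the origin.\<close>
fun Gamma :: "(complex^'m \<Rightarrow> complex^'m \<Rightarrow> complex^'d \<Rightarrow> complex^'d)
   \<Rightarrow> nat \<Rightarrow> (nat \<Rightarrow> complex^'m) \<Rightarrow> ('m::finite,'d::finite) cpt2" where
  "Gamma \<Theta> 0 ws = 0"
| "Gamma \<Theta> (Suc k) ws =
     (if odd (Suc k) then Lflow \<Theta> (ws (Suc k)) (Gamma \<Theta> k ws)
      else Lbarflow \<Theta> (ws (Suc k)) (Gamma \<Theta> k ws))"

fun Gamma_u :: "(complex^'m \<Rightarrow> complex^'m \<Rightarrow> complex^'d \<Rightarrow> complex^'d)
   \<Rightarrow> nat \<Rightarrow> (nat \<Rightarrow> complex^'m) \<Rightarrow> ('m::finite,'d::finite) cpt2" where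
  "Gamma_u \<Theta> 0 ws = 0"
| "Gamma_u \<Theta> (Suc k) ws =
     (if odd (Suc k) then Lbarflow \<Theta> (ws (Suc k)) (Gamma_u \<Theta> k ws)
      else Lflow \<Theta> (ws (Suc k)) (Gamma_u \<Theta> k ws))"

definition psi :: "(complex^'m \<Rightarrow> complex^'m \<Rightarrow> complex^'d \<Rightarrow> complex^'d)
   \<Rightarrow> nat \<Rightarrow> (nat \<Rightarrow> complex^'m) \<Rightarrow> ('m::finite,'d::finite) cpt" where
  "psi \<Theta> k ws = (if even k then snd (Gamma \<Theta> k ws) else fst (Gamma \<Theta> k ws))"

definition psi_u :: "(complex^'m \<Rightarrow> complex^'m \<Rightarrow> complex^'d \<Rightarrow> complex^'d)
   \<Rightarrow> nat \<Rightarrow> (nat \<Rightarrow> complex^'m) \<Rightarrow> ('m::finite,'d::finite) cpt" where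
  "psi_u \<Theta> k ws = (if even k then fst (Gamma_u \<Theta> k ws) else snd (Gamma_u \<Theta> k ws))"

definition vupd :: "complex^'m \<Rightarrow> 'm \<Rightarrow> complex \<Rightarrow> complex^'m" where
  "vupd v i c = (\<chi> l. if l = i then c else v $ l)"

definition jac_cols :: "((nat \<Rightarrow> complex^'m) \<Rightarrow> complex^'r) \<Rightarrow> nat \<Rightarrow> (nat \<Rightarrow> complex^'m)
   \<Rightarrow> (complex^'r) set" where
  "jac_cols F k ws = {(\<chi> r. deriv (\<lambda>c. F (ws(j := vupd (ws j) i c)) $ r) (ws j $ i)) | j i.
                        j \<in> {1..k}}"

definition rank_at :: "((nat \<Rightarrow> complex^'m) \<Rightarrow> complex^'r) \<Rightarrow> nat \<Rightarrow> (nat \<Rightarrow> complex^'m) \<Rightarrow> nat" where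
  "rank_at F k ws = vec.dim (jac_cols F k ws)"

definition gen_rk :: "((nat \<Rightarrow> complex^'m) \<Rightarrow> complex^'r) \<Rightarrow> nat \<Rightarrow> nat" where
  "gen_rk F k = (GREATEST r. \<forall>\<epsilon>>0. \<exists>ws. (\<forall>j\<in>{1..k}. norm (ws j) < \<epsilon>) \<and> r \<le> rank_at F k ws)"

definition r_rk :: "(complex^'m \<Rightarrow> complex^'m \<Rightarrow> complex^'d \<Rightarrow> complex^'d) \<Rightarrow> nat \<Rightarrow> nat" where
  "r_rk \<Theta> k = gen_rk (\<lambda>ws. flat_pt (Gamma \<Theta> k ws)) k"

definition e_mt :: "(complex^'m \<Rightarrow> complex^'m \<Rightarrow> complex^'d \<Rightarrow> complex^'d) \<Rightarrow> nat \<Rightarrow> int" where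
  "e_mt \<Theta> k = int (r_rk \<Theta> (k + 2)) - int (r_rk \<Theta> (k + 1))"

end

theory Submission
  imports Defs
begin

abbreviation clin :: "(complex^'a::finite \<Rightarrow> complex^'b::finite) \<Rightarrow> bool" where
  "clin f \<equiv> Vector_Spaces.linear ((*s) :: complex \<Rightarrow> _) ((*s) :: complex \<Rightarrow> _) f"

lemma clinI:
  fixes f :: "complex^'a::finite \<Rightarrow> complex^'b::finite"
  assumes "\<And>x y. f (x + y) = f x + f y" "\<And>c x. f (c *s x) = c *s f x"
  shows "clin f"
  using assms by (auto simp: Vector_Spaces.linear_def module_hom_axioms_def vec.vector_space_axioms
      vector_space_def module_hom_def vec.module_axioms)

lemma clin_span_image:
  fixes f :: "complex^'a::finite \<Rightarrow> complex^'b::finite"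
  assumes "clin f" shows "vec.span (f ` X) = f ` vec.span X"
  using module_hom.span_image[OF module_hom_linearI[OF assms]] by simp

lemma indep_range_c:
  fixes Q :: "complex^'N::finite \<Rightarrow> complex^'m::finite" and c :: "'m \<Rightarrow> complex^'N"
  assumes Q: "clin Q" and Qc: "\<And>i. Q (c i) = axis i 1"
  shows "vec.independent (range c)"
proof
  assume "vec.dependent (range c)"
  then obtain i where i: "c i \<in> vec.span (range c - {c i})"
    unfolding vec.dependent_def by auto
  have ci: "c k = c i \<longleftrightarrow> k = i" for k
    using Qc[of k] Qc[of i] by (metis axis_eq_axis zero_neq_one)
  have "Q (c i) \<in> Q ` vec.span (range c - {c i})" using i by blast
  also have "\<dots> = vec.span (Q ` (range c - {c i}))" using clin_span_image[OF Q] by simp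
  also have "\<dots> \<subseteq> vec.span (cart_basis - {axis i 1})"
    apply (rule vec.span_mono)
    using ci Qc by (auto simp: cart_basis_def axis_eq_axis)
  finally have "axis i 1 \<in> vec.span (cart_basis - {axis i (1::complex)})" using Qc by simp
  moreover have "axis i (1::complex) \<in> cart_basis" by (auto simp: cart_basis_def)
  ultimately have "vec.dependent (cart_basis :: (complex^'m) set)"
    unfolding vec.dependent_def by blast
  with vec.independent_Basis show False by blast
qed

lemma rank_split:
  fixes P :: "complex^'N::finite \<Rightarrow> complex^'K::finite" and Q :: "complex^'N \<Rightarrow> complex^'m::finite"
    and c :: "'m \<Rightarrow> complex^'N"
  assumes P: "clin P" and Q: "clin Q" and S: "vec.subspace S" and C1S: "C1 \<subseteq> S" and cS: "range c \<subseteq> S"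
    and Pc: "\<And>i. P (c i) = 0" and Qc: "\<And>i. Q (c i) = axis i 1"
    and inj: "\<And>v. v \<in> S \<Longrightarrow> P v = 0 \<Longrightarrow> Q v = 0 \<Longrightarrow> v = 0"
  shows "vec.dim (C1 \<union> range c) = CARD('m) + vec.dim (P ` C1)"
proof -
  obtain B1 where B1: "B1 \<subseteq> P ` C1" "vec.independent B1" "P ` C1 \<subseteq> vec.span B1"
    "card B1 = vec.dim (P ` C1)"
    using vec.basis_exists by blast
  have fB1: "finite B1" using B1(2) vec.independent_bound_general by blast
  have B10: "0 \<notin> B1" using B1(2) vec.dependent_zero by blast
  define lift where "lift b = (SOME x. x \<in> C1 \<and> P x = b)" for b
  have lift: "lift b \<in> C1 \<and> P (lift b) = b" if "b \<in> B1" for b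
    unfolding lift_def by (rule someI_ex) (use that B1(1) in auto)
  define L where "L = lift ` B1"
  have PL: "P ` L = B1" unfolding L_def using lift by (force simp: image_image)
  have injL: "inj_on P L" unfolding L_def inj_on_def using lift by auto
  have LC1: "L \<subseteq> C1" unfolding L_def using lift by auto
  have fL: "finite L" unfolding L_def using fB1 by simp
  have cardL: "card L = card B1" using card_image[OF injL] PL by simp
  have ci: "c k = c i \<longleftrightarrow> k = i" for k i
    using Qc[of k] Qc[of i] by (metis axis_eq_axis zero_neq_one)
  have injc: "inj c" using ci by (auto simp: inj_def)
  have cardc: "card (range c) = CARD('m)" using card_image[OF injc] by simp
  have disj: "L \<inter> range c = {}"
  proof -
    { fix l assume "l \<in> L" "l \<in> range c"
      then have "P l \<in> B1" "P l = 0" using PL Pc by auto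
      then have False using B10 by simp }
    then show ?thesis by blast
  qed
  have spanS: "vec.span X \<subseteq> S" if "X \<subseteq> S" for X using vec.span_minimal[OF that S] .
  have Sdiff: "x - y \<in> S" if "x \<in> S" "y \<in> S" for x y
    using S that vec.subspace_def
    by (metis (no_types, lifting) vec.span_diff vec.span_eq_iff)
  have C1span: "C1 \<subseteq> vec.span (L \<union> range c)"
  proof
    fix x assume x: "x \<in> C1"
    have "P x \<in> vec.span B1" using B1(3) x by blast
    also have "vec.span B1 = P ` vec.span L" using clin_span_image[OF P, of L] PL by simp
    finally obtain y where y: "y \<in> vec.span L" "P y = P x" by auto
    have yS: "y \<in> S" using spanS[of L] LC1 C1S y(1) by blast
    define u where "u = x - y"
    have uS: "u \<in> S" unfolding u_def using Sdiff x C1S yS by blast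
    have Pu: "P u = 0" unfolding u_def using vec.linear_diff[OF P] y by simp
    define u' where "u' = u - (\<Sum>i\<in>UNIV. (Q u $ i) *s c i)"
    have sS: "(\<Sum>i\<in>UNIV. (Q u $ i) *s c i) \<in> S"
    proof -
      have "(\<Sum>i\<in>UNIV. (Q u $ i) *s c i) \<in> vec.span (range c)"
        by (intro vec.span_sum vec.span_scale vec.span_base rangeI)
      then show ?thesis using spanS[OF cS] by blast
    qed
    have u'S: "u' \<in> S" unfolding u'_def using Sdiff uS sS by blast
    have "P u' = 0" unfolding u'_def
      using Pu by (simp add: vec.linear_diff[OF P] vec.linear_sum[OF P] vec.linear_scale[OF P] Pc)
    moreover have "Q u' = 0" unfolding u'_def
      by (simp add: vec.linear_diff[OF Q] vec.linear_sum[OF Q] vec.linear_scale[OF Q] Qc basis_expansion)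
    ultimately have "u' = 0" using inj u'S by blast
    then have "x = y + (\<Sum>i\<in>UNIV. (Q u $ i) *s c i)" unfolding u'_def u_def by (simp add: algebra_simps)
    moreover have "y \<in> vec.span (L \<union> range c)" using y(1) vec.span_mono[of L "L \<union> range c"] by blast
    moreover have "(\<Sum>i\<in>UNIV. (Q u $ i) *s c i) \<in> vec.span (L \<union> range c)"
      by (intro vec.span_sum vec.span_scale vec.span_base UnI2 rangeI)
    ultimately show "x \<in> vec.span (L \<union> range c)" using vec.span_add by metis
  qed
  have indc: "vec.independent (range c)" by (rule indep_range_c[OF Q Qc])
  have "finite L' \<Longrightarrow> L' \<subseteq> L \<Longrightarrow> vec.independent (L' \<union> range c)" for L'
  proof (induction L' rule: finite_induct)
    case empty then show ?case using indc by simp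
  next
    case (insert l L')
    have lL: "l \<in> L" using insert by auto
    have lnot: "l \<notin> L' \<union> range c" using insert(2) disj lL by auto
    have "l \<notin> vec.span (L' \<union> range c)"
    proof
      assume "l \<in> vec.span (L' \<union> range c)"
      then have "P l \<in> P ` vec.span (L' \<union> range c)" by blast
      also have "\<dots> = vec.span (P ` (L' \<union> range c))" using clin_span_image[OF P] by simp
      also have "\<dots> \<subseteq> vec.span (insert 0 (B1 - {P l}))"
      proof (rule vec.span_mono)
        show "P ` (L' \<union> range c) \<subseteq> insert 0 (B1 - {P l})"
        proof
          fix z assume "z \<in> P ` (L' \<union> range c)"
          then obtain x where x: "x \<in> L' \<union> range c" "z = P x" by blast
          show "z \<in> insert 0 (B1 - {P l})"
          proof (cases "x \<in> L'")
            case True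
            then have "x \<in> L" using insert by auto
            moreover have "x \<noteq> l" using True insert(2) by auto
            ultimately have "P x \<noteq> P l" using injL lL by (auto simp: inj_on_def)
            then show ?thesis using x PL \<open>x \<in> L\<close> by auto
          next
            case False then show ?thesis using x Pc by auto
          qed
        qed
      qed
      also have "\<dots> = vec.span (B1 - {P l})" by (rule vec.span_insert_0)
      finally have "P l \<in> vec.span (B1 - {P l})" .
      moreover have "P l \<in> B1" using PL lL by blast
      ultimately have "vec.dependent B1" unfolding vec.dependent_def by blast
      then show False using B1(2) by simp
    qed
    moreover have "vec.independent (L' \<union> range c)" using insert.IH insert.prems by auto
    ultimately have "vec.independent (insert l (L' \<union> range c))"
      using vec.independent_insert[of l "L' \<union> range c"] lnot by simp
    then show ?case by simp
  qed
  then have indep: "vec.independent (L \<union> range c)" using fL by blast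
  have sub1: "L \<union> range c \<subseteq> C1 \<union> range c" using LC1 by auto
  have sub2: "C1 \<union> range c \<subseteq> vec.span (L \<union> range c)"
    using C1span vec.span_superset[of "L \<union> range c"] by auto
  have "card (L \<union> range c) = vec.dim (C1 \<union> range c)"
    by (rule vec.basis_card_eq_dim[OF sub1 sub2 indep])
  moreover have "card (L \<union> range c) = card L + card (range c)"
    using card_Un_disjoint[OF fL _ disj] by simp
  ultimately show ?thesis using cardL cardc B1(4) by simp
qed

definition cd :: "(complex \<Rightarrow> complex^'n::finite) \<Rightarrow> complex \<Rightarrow> complex^'n \<Rightarrow> bool" where
  "cd f c0 v \<longleftrightarrow> (\<forall>r. ((\<lambda>c. f c $ r) has_field_derivative (v $ r)) (at c0))"

lemma norm_axis_c: "norm (axis r (x::complex) :: complex^'n::finite) = norm x"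
  unfolding norm_vec_def L2_set_def axis_def
  by (simp add: if_distrib[of "\<lambda>t. (norm t)\<^sup>2"] cong: if_cong)

lemma bl_axis: "bounded_linear (axis r :: complex \<Rightarrow> complex^'n::finite)"
proof (rule bounded_linear_intro[where K=1])
  show "norm (axis r x) \<le> norm x * 1" for x :: complex by (simp add: norm_axis_c)
qed (auto simp: vec_eq_iff axis_def)

lemma vec_sum_axis: "(\<Sum>r\<in>UNIV. axis r (v $ r)) = (v::complex^'n::finite)"
  by (simp add: vec_eq_iff axis_def)

lemma cd_hd:
  assumes "cd f c0 v" shows "(f has_derivative (\<lambda>h. h *s v)) (at c0)"
proof -
  have "((\<lambda>c. \<Sum>r\<in>UNIV. axis r (f c $ r)) has_derivative (\<lambda>h. \<Sum>r\<in>UNIV. axis r ((v $ r) * h))) (at c0)"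
    apply (rule has_derivative_sum)
    apply (rule bounded_linear.has_derivative[OF bl_axis])
    using assms unfolding cd_def has_field_derivative_def by blast
  moreover have "(\<lambda>c. \<Sum>r\<in>UNIV. axis r (f c $ r)) = f" by (simp add: vec_sum_axis)
  moreover have "(\<lambda>h. \<Sum>r\<in>UNIV. axis r ((v $ r) * h)) = (\<lambda>h. h *s v)"
    by (auto simp: vec_eq_iff axis_def)
  ultimately show ?thesis by simp
qed

lemma hd_cd:
  assumes "(f has_derivative (\<lambda>h. h *s v)) (at c0)" shows "cd f c0 v"
  unfolding cd_def has_field_derivative_def
proof
  fix r
  have "((\<lambda>c. f c $ r) has_derivative (\<lambda>h. (h *s v) $ r)) (at c0)"
    by (rule bounded_linear.has_derivative[OF bounded_linear_vec_nth assms])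
  moreover have "(\<lambda>h. (h *s v) $ r) = (*) (v $ r)" by (auto simp: fun_eq_iff mult.commute)
  ultimately show "((\<lambda>c. f c $ r) has_derivative (*) (v $ r)) (at c0)" by simp
qed

lemma cd_deriv: assumes "cd f c0 v" shows "(\<chi> r. deriv (\<lambda>c. f c $ r) c0) = v"
  using assms unfolding cd_def by (simp add: vec_eq_iff DERIV_imp_deriv)

lemma cd_const: "cd (\<lambda>c. k) c0 0"
  unfolding cd_def by simp

lemma cd_add: "cd f c0 a \<Longrightarrow> cd g c0 b \<Longrightarrow> cd (\<lambda>c. f c + g c) c0 (a + b)"
  unfolding cd_def by (auto intro: derivative_intros)

lemma cd_diff: "cd f c0 a \<Longrightarrow> cd g c0 b \<Longrightarrow> cd (\<lambda>c. f c - g c) c0 (a - b)"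
  unfolding cd_def by (auto intro: derivative_intros)

lemma cd_smult: "cd f c0 a \<Longrightarrow> cd (\<lambda>c. k *s f c) c0 (k *s a)"
  unfolding cd_def by (auto intro: DERIV_cmult)

lemma cd_vupd: "cd (\<lambda>c. vupd x i c) c0 (axis i 1)"
  unfolding cd_def vupd_def axis_def by (auto intro: derivative_eq_intros)

lemma cj_cj[simp]: "cj (cj v) = v" by (simp add: cj_def vec_eq_iff)

lemma cd_cnj: assumes "cd f (cnj z) v" shows "cd (\<lambda>c. cj (f (cnj c))) z (cj v)"
  unfolding cd_def
proof
  fix r
  have "((cnj \<circ> (\<lambda>c. f c $ r) \<circ> cnj) has_field_derivative cnj (v $ r)) (at z)"
    by (rule has_field_derivative_cnj_cnj) (use assms in \<open>auto simp: cd_def\<close>)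
  then show "((\<lambda>c. cj (f (cnj c)) $ r) has_field_derivative cj v $ r) (at z)"
    by (simp add: cj_def o_def)
qed

definition Tf :: "(complex^'m \<Rightarrow> complex^'m \<Rightarrow> complex^'d \<Rightarrow> complex^'d)
   \<Rightarrow> (complex^'m) \<times> (complex^'m) \<times> (complex^'d) \<Rightarrow> complex^'d" where
  "Tf \<Theta> y = \<Theta> (fst y) (fst (snd y)) (snd (snd y))"

definition cjm :: "complex^'a^'b \<Rightarrow> complex^'a^'b" where
  "cjm A = (\<chi> i j. cnj (A $ i $ j))"

lemma flat3_scale: "flat3 (h *s a, (h *s b, h *s e)) = h *s flat3 (a, (b, e))"
  by (simp add: flat3_def vec_eq_iff split: sum.split)

lemma flat3_cj: "flat3 (cj a, (cj b, cj e)) = cj (flat3 (a, (b, e)))"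
  by (simp add: flat3_def cj_def vec_eq_iff split: sum.split)

lemma flat3_add: "flat3 (a + a', (b + b', e + e')) = flat3 (a, (b, e)) + flat3 (a', (b', e'))"
  by (simp add: flat3_def vec_eq_iff split: sum.split)

lemma flat3_zero[simp]: "flat3 (0, (0, 0)) = 0"
  by (simp add: flat3_def vec_eq_iff split: sum.split)

lemma mv_scale: "(A::complex^'a::finite^'b::finite) *v (h *s x) = h *s (A *v x)"
  by (simp add: matrix_vector_mult_def vec_eq_iff sum_distrib_left ac_simps)

lemma cj_mv: "cj ((A::complex^'a::finite^'b::finite) *v cj x) = cjm A *v x"
  by (simp add: matrix_vector_mult_def vec_eq_iff cj_def cjm_def)

lemma norm_cj[simp]: "norm (cj (v::complex^'n::finite)) = norm v"
  by (simp add: norm_vec_def cj_def)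

lemma sq_norm_vec: "(norm (v::complex^'n::finite))\<^sup>2 = (\<Sum>i\<in>UNIV. (norm (v $ i))\<^sup>2)"
  unfolding norm_vec_def L2_set_def by (simp add: sum_nonneg)

lemma norm_flat3: "norm (flat3 x) = norm x"
proof -
  obtain a b e where x: "x = (a, (b, e))" by (cases x) auto
  have "(norm (flat3 x))\<^sup>2 = (norm a)\<^sup>2 + (norm b)\<^sup>2 + (norm e)\<^sup>2"
    unfolding sq_norm_vec
    by (simp add: UNIV_Plus_UNIV[symmetric] sum.Plus del: UNIV_Plus_UNIV)
       (simp add: flat3_def x o_def)
  also have "\<dots> = (norm x)\<^sup>2" by (simp add: x norm_Pair)
  finally show ?thesis by (simp add: power2_eq_iff_nonneg)
qed

lemma cd_Theta:
  assumes hd: "(Tf \<Theta> has_derivative (\<lambda>h. A *v flat3 h)) (at (a c0, (b c0, e c0)))"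
    and a: "cd a c0 va" and b: "cd b c0 vb" and e: "cd e c0 ve"
  shows "cd (\<lambda>c. \<Theta> (a c) (b c) (e c)) c0 (A *v flat3 (va, (vb, ve)))"
proof -
  have "((\<lambda>c. (a c, (b c, e c))) has_derivative (\<lambda>h. (h *s va, (h *s vb, h *s ve)))) (at c0)"
    by (intro has_derivative_Pair cd_hd a b e)
  from diff_chain_at[OF this hd]
  have "((\<lambda>c. Tf \<Theta> (a c, (b c, e c))) has_derivative (\<lambda>h. A *v flat3 (h *s va, (h *s vb, h *s ve)))) (at c0)"
    by (simp add: o_def)
  then show ?thesis
    by (intro hd_cd) (simp add: flat3_scale mv_scale Tf_def)
qed

lemma cd_Thetabar:
  assumes hd: "(Tf \<Theta> has_derivative (\<lambda>h. A *v flat3 h)) (at (cj (a c0), (cj (b c0), cj (e c0))))"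
    and a: "cd a c0 va" and b: "cd b c0 vb" and e: "cd e c0 ve"
  shows "cd (\<lambda>c. Theta_bar \<Theta> (a c) (b c) (e c)) c0 (cjm A *v flat3 (va, (vb, ve)))"
proof -
  have a': "cd (\<lambda>c. cj (a (cnj c))) (cnj c0) (cj va)" by (rule cd_cnj) (simp add: a)
  have b': "cd (\<lambda>c. cj (b (cnj c))) (cnj c0) (cj vb)" by (rule cd_cnj) (simp add: b)
  have e': "cd (\<lambda>c. cj (e (cnj c))) (cnj c0) (cj ve)" by (rule cd_cnj) (simp add: e)
  have "cd (\<lambda>c. \<Theta> (cj (a (cnj c))) (cj (b (cnj c))) (cj (e (cnj c)))) (cnj c0)
          (A *v flat3 (cj va, (cj vb, cj ve)))"
    by (rule cd_Theta[OF _ a' b' e']) (simp add: hd)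
  from cd_cnj[OF this[simplified]]
  show ?thesis by (simp add: Theta_bar_def flat3_cj cj_mv)
qed

lemma hol_ball:
  assumes "holomorphic_near_0 \<Theta>"
  shows "\<exists>r>0. \<forall>x. norm x < r \<longrightarrow> (\<exists>A. (Tf \<Theta> has_derivative (\<lambda>h. A *v flat3 h)) (at x))"
proof -
  obtain U where U: "open U" "0 \<in> U" and H: "\<And>x. flat3 x \<in> U \<Longrightarrow>
      (\<exists>A. ((\<lambda>y. \<Theta> (fst y) (fst (snd y)) (snd (snd y))) has_derivative (\<lambda>h. A *v flat3 h)) (at x))"
    using assms unfolding holomorphic_near_0_def by blast
  obtain r where r: "r > 0" "ball 0 r \<subseteq> U" using U open_contains_ball by blast
  have "flat3 x \<in> U" if "norm x < r" for x
    using r that by (auto simp: norm_flat3 dist_norm)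
  then show ?thesis using r H unfolding Tf_def by blast
qed

lemma Tf_cont0:
  assumes "holomorphic_near_0 \<Theta>" "\<Theta> 0 0 0 = 0"
  shows "\<forall>\<epsilon>>0. \<exists>\<eta>>0. \<forall>x. norm x < \<eta> \<longrightarrow> norm (Tf \<Theta> x) < \<epsilon>"
proof -
  obtain r where r: "r > 0" "\<forall>x. norm x < r \<longrightarrow> (\<exists>A. (Tf \<Theta> has_derivative (\<lambda>h. A *v flat3 h)) (at x))"
    using hol_ball[OF assms(1)] by blast
  then obtain A where "(Tf \<Theta> has_derivative (\<lambda>h. A *v flat3 h)) (at 0)"
    using r(2)[rule_format, of 0] r(1) by auto
  then have "isCont (Tf \<Theta>) 0" using has_derivative_continuous by blast
  moreover have "Tf \<Theta> 0 = 0" using assms(2) by (simp add: Tf_def)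
  ultimately show ?thesis unfolding continuous_at_eps_delta dist_norm by (metis diff_zero)
qed

definition D4 :: "(complex \<Rightarrow> ('m::finite,'d::finite) cpt2) \<Rightarrow> complex \<Rightarrow> ('m,'d) cpt2 \<Rightarrow> bool" where
  "D4 p c0 v \<longleftrightarrow> cd (\<lambda>c. fst (fst (p c))) c0 (fst (fst v)) \<and> cd (\<lambda>c. snd (fst (p c))) c0 (snd (fst v))
     \<and> cd (\<lambda>c. fst (snd (p c))) c0 (fst (snd v)) \<and> cd (\<lambda>c. snd (snd (p c))) c0 (snd (snd v))"

lemma Lflow_alt: "Lflow \<Theta> w p = ((fst (fst p) + w, snd (snd p) + \<i> *s Theta_bar \<Theta> (fst (fst p) + w) (fst (snd p)) (snd (snd p))), snd p)"
  by (cases p) (auto simp: Lflow_def split: prod.split)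

lemma Lbar_alt: "Lbarflow \<Theta> z p = (fst p, (fst (snd p) + z, snd (fst p) - \<i> *s \<Theta> (fst (snd p) + z) (fst (fst p)) (snd (fst p))))"
  by (cases p) (auto simp: Lbarflow_def split: prod.split)

lemma D4_const: "D4 (\<lambda>c. k) c0 0"
  by (simp add: D4_def cd_const)

lemma D4_Lflow:
  assumes p: "D4 p c0 v" and w: "cd wp c0 vw"
    and hd: "(Tf \<Theta> has_derivative (\<lambda>h. A *v flat3 h))
              (at (cj (fst (fst (p c0)) + wp c0), (cj (fst (snd (p c0))), cj (snd (snd (p c0))))))"
  shows "D4 (\<lambda>c. Lflow \<Theta> (wp c) (p c)) c0
     ((fst (fst v) + vw, snd (snd v) + \<i> *s (cjm A *v flat3 (fst (fst v) + vw, (fst (snd v), snd (snd v))))), snd v)"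
proof -
  have p1: "cd (\<lambda>c. fst (fst (p c))) c0 (fst (fst v))" and p3: "cd (\<lambda>c. fst (snd (p c))) c0 (fst (snd v))"
    and p4: "cd (\<lambda>c. snd (snd (p c))) c0 (snd (snd v))" using p by (auto simp: D4_def)
  have a: "cd (\<lambda>c. fst (fst (p c)) + wp c) c0 (fst (fst v) + vw)" by (rule cd_add[OF p1 w])
  have "cd (\<lambda>c. Theta_bar \<Theta> (fst (fst (p c)) + wp c) (fst (snd (p c))) (snd (snd (p c)))) c0
         (cjm A *v flat3 (fst (fst v) + vw, (fst (snd v), snd (snd v))))"
    by (rule cd_Thetabar[OF hd a p3 p4])
  then have b: "cd (\<lambda>c. snd (snd (p c)) + \<i> *s Theta_bar \<Theta> (fst (fst (p c)) + wp c) (fst (snd (p c))) (snd (snd (p c)))) c0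
         (snd (snd v) + \<i> *s (cjm A *v flat3 (fst (fst v) + vw, (fst (snd v), snd (snd v)))))"
    by (intro cd_add[OF p4] cd_smult)
  show ?thesis unfolding D4_def Lflow_alt using a b p3 p4 by simp
qed

lemma D4_Lbar:
  assumes p: "D4 p c0 v" and w: "cd wp c0 vw"
    and hd: "(Tf \<Theta> has_derivative (\<lambda>h. A *v flat3 h))
              (at (fst (snd (p c0)) + wp c0, (fst (fst (p c0)), snd (fst (p c0)))))"
  shows "D4 (\<lambda>c. Lbarflow \<Theta> (wp c) (p c)) c0
     (fst v, (fst (snd v) + vw, snd (fst v) - \<i> *s (A *v flat3 (fst (snd v) + vw, (fst (fst v), snd (fst v))))))"
proof -
  have p1: "cd (\<lambda>c. fst (fst (p c))) c0 (fst (fst v))" and p2: "cd (\<lambda>c. snd (fst (p c))) c0 (snd (fst v))"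
    and p3: "cd (\<lambda>c. fst (snd (p c))) c0 (fst (snd v))" using p by (auto simp: D4_def)
  have a: "cd (\<lambda>c. fst (snd (p c)) + wp c) c0 (fst (snd v) + vw)" by (rule cd_add[OF p3 w])
  have "cd (\<lambda>c. \<Theta> (fst (snd (p c)) + wp c) (fst (fst (p c))) (snd (fst (p c)))) c0
         (A *v flat3 (fst (snd v) + vw, (fst (fst v), snd (fst v))))"
    by (rule cd_Theta[OF hd a p1 p2])
  then have b: "cd (\<lambda>c. snd (fst (p c)) - \<i> *s \<Theta> (fst (snd (p c)) + wp c) (fst (fst (p c))) (snd (fst (p c)))) c0
         (snd (fst v) - \<i> *s (A *v flat3 (fst (snd v) + vw, (fst (fst v), snd (fst v)))))"
    by (intro cd_diff[OF p2] cd_smult)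
  show ?thesis unfolding D4_def Lbar_alt using a b p1 p2 by simp
qed

definition sm :: "real \<Rightarrow> nat \<Rightarrow> (nat \<Rightarrow> complex^'m::finite) \<Rightarrow> bool" where
  "sm \<delta> n ws \<longleftrightarrow> (\<forall>j\<in>{1..n}. norm (ws j) < \<delta>)"

definition dep :: "nat \<Rightarrow> ((nat \<Rightarrow> complex^'m::finite) \<Rightarrow> 'b) \<Rightarrow> bool" where
  "dep n G \<longleftrightarrow> (\<forall>ws ws'. (\<forall>j\<in>{1..n}. ws j = ws' j) \<longrightarrow> G ws = G ws')"

definition pth :: "((nat \<Rightarrow> complex^'m::finite) \<Rightarrow> 'b) \<Rightarrow> (nat \<Rightarrow> complex^'m) \<Rightarrow> nat \<Rightarrow> 'm \<Rightarrow> complex \<Rightarrow> 'b" where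
  "pth G ws j i = (\<lambda>c. G (ws(j := vupd (ws j) i c)))"

definition good :: "nat \<Rightarrow> ((nat \<Rightarrow> complex^'m::finite) \<Rightarrow> ('m,'d::finite) cpt2) \<Rightarrow> bool" where
  "good n G \<longleftrightarrow> dep n G \<and> (\<forall>\<epsilon>>0. \<exists>\<delta>>0. \<forall>ws. sm \<delta> n ws \<longrightarrow> norm (G ws) < \<epsilon>)
     \<and> (\<exists>\<delta>>0. \<forall>ws. sm \<delta> n ws \<longrightarrow> (\<forall>j i. \<exists>v. D4 (pth G ws j i) (ws j $ i) v))"

lemma vupd_self[simp]: "vupd v i (v $ i) = v" by (simp add: vupd_def vec_eq_iff)

lemma pth_c0[simp]: "pth G ws j i (ws j $ i) = G ws" by (simp add: pth_def)

lemma sm_mono: "sm \<delta> k ws \<Longrightarrow> \<delta> \<le> \<delta>' \<Longrightarrow> k' \<le> k \<Longrightarrow> sm \<delta>' k' ws"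
  unfolding sm_def by force

lemma sm_Suc: "sm \<delta> (Suc n) ws \<Longrightarrow> norm (ws (Suc n)) < \<delta>"
  unfolding sm_def by auto

lemma norm_parts:
  fixes p :: "('m::finite,'d::finite) cpt2"
  shows "norm (fst (fst p)) \<le> norm p" "norm (snd (fst p)) \<le> norm p" "norm (fst (snd p)) \<le> norm p"
    "norm (snd (snd p)) \<le> norm p" "norm (fst p) \<le> norm p" "norm (snd p) \<le> norm p"
  by (cases p; auto intro: order_trans[OF norm_fst_le] order_trans[OF norm_snd_le] norm_fst_le norm_snd_le)+

lemma norm_smult_c: "norm (c *s (x::complex^'n::finite)) = norm c * norm x"
  unfolding norm_vec_def by (simp add: norm_mult L2_set_right_distrib)

lemma norm_cj3: "norm (cj a, (cj b, cj e)) = norm (a, (b, e))"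
  by (simp add: norm_Pair)

lemma cd_wp: "\<exists>vw. cd (\<lambda>c. (ws(j := vupd (ws j) i c)) k) c0 vw"
proof (cases "j = k")
  case True then show ?thesis using cd_vupd by auto
next
  case False then show ?thesis using cd_const by auto
qed

lemma dep_pth: "dep n G \<Longrightarrow> j \<notin> {1..n} \<Longrightarrow> pth G ws j i = (\<lambda>c. G ws)"
  unfolding dep_def pth_def by (rule ext) (metis fun_upd_other)

lemma good_step_L:
  fixes \<Theta> :: "complex^'m::finite \<Rightarrow> complex^'m \<Rightarrow> complex^'d::finite \<Rightarrow> complex^'d"
  assumes hol: "holomorphic_near_0 \<Theta>" and orig: "\<Theta> 0 0 0 = 0" and g: "good n G"
  shows "good (Suc n) (\<lambda>ws. Lflow \<Theta> (ws (Suc n)) (G ws))"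
proof -
  have depG: "dep n G" and smG: "\<forall>\<epsilon>>0. \<exists>\<delta>>0. \<forall>ws. sm \<delta> n ws \<longrightarrow> norm (G ws) < \<epsilon>"
    and dG: "\<exists>\<delta>>0. \<forall>ws. sm \<delta> n ws \<longrightarrow> (\<forall>j i. \<exists>v. D4 (pth G ws j i) (ws j $ i) v)"
    using g by (auto simp: good_def)
  obtain r where r: "r > 0" "\<And>x. norm x < r \<Longrightarrow> \<exists>A. (Tf \<Theta> has_derivative (\<lambda>h. A *v flat3 h)) (at x)"
    using hol_ball[OF hol] by blast
  have cont: "\<forall>\<epsilon>>0. \<exists>\<eta>>0. \<forall>x. norm x < \<eta> \<longrightarrow> norm (Tf \<Theta> x) < \<epsilon>" by (rule Tf_cont0[OF hol orig])
  have tri: "norm (fst (fst p) + w, snd p) \<le> 2 * norm p + norm w" for p :: "('m,'d) cpt2" and w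
  proof -
    have "norm (fst (fst p) + w, snd p) \<le> norm (fst (fst p) + w) + norm (snd p)" by (rule norm_Pair_le)
    also have "\<dots> \<le> norm (fst (fst p)) + norm w + norm (snd p)" using norm_triangle_ineq by simp
    finally show ?thesis using norm_parts[of p] by simp
  qed
  have thb: "norm (Theta_bar \<Theta> a b e) = norm (Tf \<Theta> (cj a, (cj b, cj e)))" for a b e
    by (simp add: Theta_bar_def Tf_def)
  have dep': "dep (Suc n) (\<lambda>ws. Lflow \<Theta> (ws (Suc n)) (G ws))"
  proof -
    have "\<forall>ws ws'. (\<forall>j\<in>{1..Suc n}. ws j = ws' j) \<longrightarrow> G ws = G ws' \<and> ws (Suc n) = ws' (Suc n)"
      using depG unfolding dep_def by auto
    then show ?thesis unfolding dep_def by metis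
  qed
  have sm': "\<exists>\<delta>>0. \<forall>ws. sm \<delta> (Suc n) ws \<longrightarrow> norm (Lflow \<Theta> (ws (Suc n)) (G ws)) < \<epsilon>" if "\<epsilon> > 0" for \<epsilon>
  proof -
    obtain \<eta> where \<eta>: "\<eta> > 0" "\<And>x. norm x < \<eta> \<Longrightarrow> norm (Tf \<Theta> x) < \<epsilon> / 4"
      using cont \<open>\<epsilon> > 0\<close> by (metis divide_pos_pos zero_less_numeral)
    define \<mu> where "\<mu> = min (\<epsilon> / 8) (\<eta> / 4)"
    have \<mu>: "\<mu> > 0" using \<eta> \<open>\<epsilon> > 0\<close> by (simp add: \<mu>_def)
    obtain \<delta> where \<delta>: "\<delta> > 0" "\<And>ws. sm \<delta> n ws \<Longrightarrow> norm (G ws) < \<mu>" using smG \<mu> by blast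
    show ?thesis
    proof (intro exI[of _ "min \<delta> \<mu>"] conjI allI impI)
      show "min \<delta> \<mu> > 0" using \<delta> \<mu> by simp
      fix ws :: "nat \<Rightarrow> complex^'m" assume ws: "sm (min \<delta> \<mu>) (Suc n) ws"
      define p where "p = G ws"
      define w where "w = ws (Suc n)"
      have np: "norm p < \<mu>" unfolding p_def using \<delta>(2) sm_mono[OF ws] by simp
      have nw: "norm w < \<mu>" unfolding w_def using sm_Suc[OF ws] by simp
      have "norm p < \<eta> / 4" "norm w < \<eta> / 4" "norm p < \<epsilon> / 8" "norm w < \<epsilon> / 8"
        using np nw by (auto simp: \<mu>_def)
      note small = this
      have "norm (fst (fst p) + w, snd p) < \<eta>" using tri[of p w] small(1,2) norm_ge_zero[of p] by linarith
      then have nt: "norm (Theta_bar \<Theta> (fst (fst p) + w) (fst (snd p)) (snd (snd p))) < \<epsilon> / 4"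
        using \<eta>(2) by (simp add: thb norm_cj3)
      have "norm (Lflow \<Theta> w p) \<le> norm (fst (fst p) + w, snd (snd p) + \<i> *s Theta_bar \<Theta> (fst (fst p) + w) (fst (snd p)) (snd (snd p))) + norm (snd p)"
        unfolding Lflow_alt by (rule norm_Pair_le)
      also have "\<dots> \<le> (norm (fst (fst p)) + norm w) + (norm (snd (snd p)) + norm (Theta_bar \<Theta> (fst (fst p) + w) (fst (snd p)) (snd (snd p)))) + norm (snd p)"
      proof -
        define X where "X = Theta_bar \<Theta> (fst (fst p) + w) (fst (snd p)) (snd (snd p))"
        have n1: "norm (fst (fst p) + w) \<le> norm (fst (fst p)) + norm w" by (rule norm_triangle_ineq)
        have n2: "norm (snd (snd p) + \<i> *s X) \<le> norm (snd (snd p)) + norm X"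
          using norm_triangle_ineq[of "snd (snd p)" "\<i> *s X"] norm_smult_c[of \<i> X] by simp
        have "norm (fst (fst p) + w, snd (snd p) + \<i> *s X) \<le> norm (fst (fst p) + w) + norm (snd (snd p) + \<i> *s X)"
          by (rule norm_Pair_le)
        then show ?thesis using n1 n2 unfolding X_def by linarith
      qed
      also have "\<dots> < \<epsilon>" using norm_parts[of p] small nt \<open>\<epsilon> > 0\<close> by linarith
      finally show "norm (Lflow \<Theta> (ws (Suc n)) (G ws)) < \<epsilon>" unfolding p_def w_def .
    qed
  qed
  have d': "\<exists>\<delta>>0. \<forall>ws. sm \<delta> (Suc n) ws \<longrightarrow> (\<forall>j i. \<exists>v. D4 (pth (\<lambda>ws. Lflow \<Theta> (ws (Suc n)) (G ws)) ws j i) (ws j $ i) v)"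
  proof -
    obtain \<delta>d where \<delta>d: "\<delta>d > 0" "\<And>ws. sm \<delta>d n ws \<Longrightarrow> (\<forall>j i. \<exists>v. D4 (pth G ws j i) (ws j $ i) v)" using dG by blast
    obtain \<delta>s where \<delta>s: "\<delta>s > 0" "\<And>ws. sm \<delta>s n ws \<Longrightarrow> norm (G ws) < r / 4" using smG r(1)
      by (metis divide_pos_pos zero_less_numeral)
    show ?thesis
    proof (intro exI[of _ "min \<delta>d (min \<delta>s (r / 4))"] conjI allI impI)
      show "min \<delta>d (min \<delta>s (r / 4)) > 0" using \<delta>d \<delta>s r by simp
      fix ws :: "nat \<Rightarrow> complex^'m" and j i assume ws: "sm (min \<delta>d (min \<delta>s (r / 4))) (Suc n) ws"
      have np: "norm (G ws) < r / 4" using \<delta>s(2) sm_mono[OF ws] by simp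
      have nw: "norm (ws (Suc n)) < r / 4" using sm_Suc[OF ws] by simp
      have "norm (fst (fst (G ws)) + ws (Suc n), snd (G ws)) < r" using tri[of "G ws" "ws (Suc n)"] np nw norm_ge_zero[of "G ws"] by linarith
      then obtain A where A: "(Tf \<Theta> has_derivative (\<lambda>h. A *v flat3 h))
          (at (cj (fst (fst (G ws)) + ws (Suc n)), (cj (fst (snd (G ws))), cj (snd (snd (G ws))))))"
        using r(2) norm_cj3 by (metis prod.collapse)
      obtain v where v: "D4 (pth G ws j i) (ws j $ i) v" using \<delta>d(2) sm_mono[OF ws] by fastforce
      obtain vw where vw: "cd (\<lambda>c. (ws(j := vupd (ws j) i c)) (Suc n)) (ws j $ i) vw" using cd_wp[of ws j i "Suc n" "ws j $ i"] by blast
      have "pth (\<lambda>ws. Lflow \<Theta> (ws (Suc n)) (G ws)) ws j i = (\<lambda>c. Lflow \<Theta> ((ws(j := vupd (ws j) i c)) (Suc n)) (pth G ws j i c))"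
        by (simp add: pth_def)
      moreover have "(Tf \<Theta> has_derivative (\<lambda>h. A *v flat3 h))
          (at (cj (fst (fst (pth G ws j i (ws j $ i))) + (ws(j := vupd (ws j) i (ws j $ i))) (Suc n)),
            (cj (fst (snd (pth G ws j i (ws j $ i)))), cj (snd (snd (pth G ws j i (ws j $ i)))))))"
        using A by simp
      note D4_Lflow[OF v vw this]
      ultimately show "\<exists>v. D4 (pth (\<lambda>ws. Lflow \<Theta> (ws (Suc n)) (G ws)) ws j i) (ws j $ i) v"
        by (intro exI) (subst \<open>pth _ ws j i = _\<close>, assumption)
    qed
  qed
  show ?thesis unfolding good_def using dep' sm' d' by blast
qed


lemma good_step_Lb:
  fixes \<Theta> :: "complex^'m::finite \<Rightarrow> complex^'m \<Rightarrow> complex^'d::finite \<Rightarrow> complex^'d"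
  assumes hol: "holomorphic_near_0 \<Theta>" and orig: "\<Theta> 0 0 0 = 0" and g: "good n G"
  shows "good (Suc n) (\<lambda>ws. Lbarflow \<Theta> (ws (Suc n)) (G ws))"
proof -
  have depG: "dep n G" and smG: "\<forall>\<epsilon>>0. \<exists>\<delta>>0. \<forall>ws. sm \<delta> n ws \<longrightarrow> norm (G ws) < \<epsilon>"
    and dG: "\<exists>\<delta>>0. \<forall>ws. sm \<delta> n ws \<longrightarrow> (\<forall>j i. \<exists>v. D4 (pth G ws j i) (ws j $ i) v)"
    using g by (auto simp: good_def)
  obtain r where r: "r > 0" "\<And>x. norm x < r \<Longrightarrow> \<exists>A. (Tf \<Theta> has_derivative (\<lambda>h. A *v flat3 h)) (at x)"
    using hol_ball[OF hol] by blast
  have cont: "\<forall>\<epsilon>>0. \<exists>\<eta>>0. \<forall>x. norm x < \<eta> \<longrightarrow> norm (Tf \<Theta> x) < \<epsilon>" by (rule Tf_cont0[OF hol orig])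
  have tri: "norm (fst (snd p) + w, fst p) \<le> 2 * norm p + norm w" for p :: "('m,'d) cpt2" and w
  proof -
    have "norm (fst (snd p) + w, fst p) \<le> norm (fst (snd p) + w) + norm (fst p)" by (rule norm_Pair_le)
    also have "\<dots> \<le> norm (fst (snd p)) + norm w + norm (fst p)" using norm_triangle_ineq by simp
    finally show ?thesis using norm_parts[of p] by simp
  qed
  have thb: "norm (Theta_bar \<Theta> a b e) = norm (Tf \<Theta> (cj a, (cj b, cj e)))" for a b e
    by (simp add: Theta_bar_def Tf_def)
  have dep': "dep (Suc n) (\<lambda>ws. Lbarflow \<Theta> (ws (Suc n)) (G ws))"
  proof -
    have "\<forall>ws ws'. (\<forall>j\<in>{1..Suc n}. ws j = ws' j) \<longrightarrow> G ws = G ws' \<and> ws (Suc n) = ws' (Suc n)"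
      using depG unfolding dep_def by auto
    then show ?thesis unfolding dep_def by metis
  qed
  have sm': "\<exists>\<delta>>0. \<forall>ws. sm \<delta> (Suc n) ws \<longrightarrow> norm (Lbarflow \<Theta> (ws (Suc n)) (G ws)) < \<epsilon>" if "\<epsilon> > 0" for \<epsilon>
  proof -
    obtain \<eta> where \<eta>: "\<eta> > 0" "\<And>x. norm x < \<eta> \<Longrightarrow> norm (Tf \<Theta> x) < \<epsilon> / 4"
      using cont \<open>\<epsilon> > 0\<close> by (metis divide_pos_pos zero_less_numeral)
    define \<mu> where "\<mu> = min (\<epsilon> / 8) (\<eta> / 4)"
    have \<mu>: "\<mu> > 0" using \<eta> \<open>\<epsilon> > 0\<close> by (simp add: \<mu>_def)
    obtain \<delta> where \<delta>: "\<delta> > 0" "\<And>ws. sm \<delta> n ws \<Longrightarrow> norm (G ws) < \<mu>" using smG \<mu> by blast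
    show ?thesis
    proof (intro exI[of _ "min \<delta> \<mu>"] conjI allI impI)
      show "min \<delta> \<mu> > 0" using \<delta> \<mu> by simp
      fix ws :: "nat \<Rightarrow> complex^'m" assume ws: "sm (min \<delta> \<mu>) (Suc n) ws"
      define p where "p = G ws"
      define w where "w = ws (Suc n)"
      have np: "norm p < \<mu>" unfolding p_def using \<delta>(2) sm_mono[OF ws] by simp
      have nw: "norm w < \<mu>" unfolding w_def using sm_Suc[OF ws] by simp
      have "norm p < \<eta> / 4" "norm w < \<eta> / 4" "norm p < \<epsilon> / 8" "norm w < \<epsilon> / 8"
        using np nw by (auto simp: \<mu>_def)
      note small = this
      have "norm (fst (snd p) + w, fst p) < \<eta>" using tri[of p w] small(1,2) norm_ge_zero[of p] by linarith
      then have nt: "norm (\<Theta> (fst (snd p) + w) (fst (fst p)) (snd (fst p))) < \<epsilon> / 4"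
        using \<eta>(2)[of "(fst (snd p) + w, fst p)"] by (simp add: Tf_def)
      have "norm (Lbarflow \<Theta> w p) \<le> norm (fst p) + norm (fst (snd p) + w, snd (fst p) - \<i> *s \<Theta> (fst (snd p) + w) (fst (fst p)) (snd (fst p)))"
        unfolding Lbar_alt by (rule norm_Pair_le)
      also have "\<dots> \<le> norm (fst p) + ((norm (fst (snd p)) + norm w) + (norm (snd (fst p)) + norm (\<Theta> (fst (snd p) + w) (fst (fst p)) (snd (fst p)))))"
      proof -
        define X where "X = \<Theta> (fst (snd p) + w) (fst (fst p)) (snd (fst p))"
        have n1: "norm (fst (snd p) + w) \<le> norm (fst (snd p)) + norm w" by (rule norm_triangle_ineq)
        have n2: "norm (snd (fst p) - \<i> *s X) \<le> norm (snd (fst p)) + norm X"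
          using norm_triangle_ineq4[of "snd (fst p)" "\<i> *s X"] norm_smult_c[of \<i> X] by simp
        have "norm (fst (snd p) + w, snd (fst p) - \<i> *s X) \<le> norm (fst (snd p) + w) + norm (snd (fst p) - \<i> *s X)"
          by (rule norm_Pair_le)
        then show ?thesis using n1 n2 unfolding X_def by linarith
      qed
      also have "\<dots> < \<epsilon>" using norm_parts[of p] small nt \<open>\<epsilon> > 0\<close> by linarith
      finally show "norm (Lbarflow \<Theta> (ws (Suc n)) (G ws)) < \<epsilon>" unfolding p_def w_def .
    qed
  qed
  have d': "\<exists>\<delta>>0. \<forall>ws. sm \<delta> (Suc n) ws \<longrightarrow> (\<forall>j i. \<exists>v. D4 (pth (\<lambda>ws. Lbarflow \<Theta> (ws (Suc n)) (G ws)) ws j i) (ws j $ i) v)"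
  proof -
    obtain \<delta>d where \<delta>d: "\<delta>d > 0" "\<And>ws. sm \<delta>d n ws \<Longrightarrow> (\<forall>j i. \<exists>v. D4 (pth G ws j i) (ws j $ i) v)" using dG by blast
    obtain \<delta>s where \<delta>s: "\<delta>s > 0" "\<And>ws. sm \<delta>s n ws \<Longrightarrow> norm (G ws) < r / 4" using smG r(1)
      by (metis divide_pos_pos zero_less_numeral)
    show ?thesis
    proof (intro exI[of _ "min \<delta>d (min \<delta>s (r / 4))"] conjI allI impI)
      show "min \<delta>d (min \<delta>s (r / 4)) > 0" using \<delta>d \<delta>s r by simp
      fix ws :: "nat \<Rightarrow> complex^'m" and j i assume ws: "sm (min \<delta>d (min \<delta>s (r / 4))) (Suc n) ws"
      have np: "norm (G ws) < r / 4" using \<delta>s(2) sm_mono[OF ws] by simp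
      have nw: "norm (ws (Suc n)) < r / 4" using sm_Suc[OF ws] by simp
      have "norm (fst (snd (G ws)) + ws (Suc n), fst (G ws)) < r" using tri[of "G ws" "ws (Suc n)"] np nw norm_ge_zero[of "G ws"] by linarith
      then obtain A where A: "(Tf \<Theta> has_derivative (\<lambda>h. A *v flat3 h))
          (at (fst (snd (G ws)) + ws (Suc n), (fst (fst (G ws)), snd (fst (G ws)))))"
        using r(2) by (metis prod.collapse)
      obtain v where v: "D4 (pth G ws j i) (ws j $ i) v" using \<delta>d(2) sm_mono[OF ws] by fastforce
      obtain vw where vw: "cd (\<lambda>c. (ws(j := vupd (ws j) i c)) (Suc n)) (ws j $ i) vw" using cd_wp[of ws j i "Suc n" "ws j $ i"] by blast
      have "pth (\<lambda>ws. Lbarflow \<Theta> (ws (Suc n)) (G ws)) ws j i = (\<lambda>c. Lbarflow \<Theta> ((ws(j := vupd (ws j) i c)) (Suc n)) (pth G ws j i c))"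
        by (simp add: pth_def)
      moreover have "(Tf \<Theta> has_derivative (\<lambda>h. A *v flat3 h))
          (at (fst (snd (pth G ws j i (ws j $ i))) + (ws(j := vupd (ws j) i (ws j $ i))) (Suc n),
            (fst (fst (pth G ws j i (ws j $ i))), snd (fst (pth G ws j i (ws j $ i))))))"
        using A by simp
      note D4_Lbar[OF v vw this]
      ultimately show "\<exists>v. D4 (pth (\<lambda>ws. Lbarflow \<Theta> (ws (Suc n)) (G ws)) ws j i) (ws j $ i) v"
        by (intro exI) (subst \<open>pth _ ws j i = _\<close>, assumption)
    qed
  qed
  show ?thesis unfolding good_def using dep' sm' d' by blast
qed

definition pw :: "complex^(('m::finite+'d::finite)+('m+'d)) \<Rightarrow> complex^'m" where "pw v = (\<chi> i. v $ Inl (Inl i))"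
definition pz :: "complex^(('m::finite+'d::finite)+('m+'d)) \<Rightarrow> complex^'d" where "pz v = (\<chi> i. v $ Inl (Inr i))"
definition pze :: "complex^(('m::finite+'d::finite)+('m+'d)) \<Rightarrow> complex^'m" where "pze v = (\<chi> i. v $ Inr (Inl i))"
definition pxi :: "complex^(('m::finite+'d::finite)+('m+'d)) \<Rightarrow> complex^'d" where "pxi v = (\<chi> i. v $ Inr (Inr i))"
definition pt :: "complex^('a::finite+'b::finite) \<Rightarrow> complex^'a" where "pt v = (\<chi> i. v $ Inl i)"
definition ptau :: "complex^('a::finite+'b::finite) \<Rightarrow> complex^'b" where "ptau v = (\<chi> i. v $ Inr i)"

lemma p_flat[simp]:
  "pw (flat_pt q) = fst (fst q)" "pz (flat_pt q) = snd (fst q)" "pze (flat_pt q) = fst (snd q)"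
  "pxi (flat_pt q) = snd (snd q)" "pt (flat_pt q) = flat_t (fst q)" "ptau (flat_pt q) = flat_t (snd q)"
  by (simp_all add: pw_def pz_def pze_def pxi_def pt_def ptau_def flat_pt_def flat_t_def vec_eq_iff)

lemma p_lin: "clin pw" "clin pz" "clin pze" "clin pxi" "clin pt" "clin ptau"
  by (auto intro!: clinI simp: pw_def pz_def pze_def pxi_def pt_def ptau_def vec_eq_iff)

lemma flat_t_zero[simp]: "flat_t (0, 0) = 0"
  by (simp add: flat_t_def vec_eq_iff split: sum.split)

lemma ptau_0: "ptau v = 0 \<longleftrightarrow> pze v = 0 \<and> pxi v = 0"
  by (auto simp: ptau_def pze_def pxi_def vec_eq_iff; metis sum.exhaust)

lemma pt_0: "pt v = 0 \<longleftrightarrow> pw v = 0 \<and> pz v = 0"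
  by (auto simp: pt_def pw_def pz_def vec_eq_iff; metis sum.exhaust)

lemma v_0: "pw v = 0 \<Longrightarrow> pz v = 0 \<Longrightarrow> pze v = 0 \<Longrightarrow> pxi v = 0 \<Longrightarrow> v = 0"
  by (auto simp: pw_def pz_def pze_def pxi_def vec_eq_iff split: sum.split) (metis sum.exhaust)

lemma D4_flat:
  assumes "D4 p c0 v"
  shows "cd (\<lambda>c. flat_pt (p c)) c0 (flat_pt v)" "cd (\<lambda>c. flat_t (snd (p c))) c0 (flat_t (snd v))"
    "cd (\<lambda>c. flat_t (fst (p c))) c0 (flat_t (fst v))"
  using assms unfolding D4_def cd_def flat_pt_def flat_t_def by (auto split: sum.split)

lemma subspace_lin_eq:
  fixes X :: "complex^'a::finite \<Rightarrow> complex^'b::finite"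
  assumes "clin X" "clin Y" "clin Z"
  shows "vec.subspace {v. X v = Y v + Z v}"
  unfolding vec.subspace_def
  using vec.linear_0[OF assms(1)] vec.linear_0[OF assms(2)] vec.linear_0[OF assms(3)]
    vec.linear_add[OF assms(1)] vec.linear_add[OF assms(2)] vec.linear_add[OF assms(3)]
    vec.linear_scale[OF assms(1)] vec.linear_scale[OF assms(2)] vec.linear_scale[OF assms(3)]
  by (auto simp: algebra_simps)

lemma clin_Z:
  fixes M :: "complex^(('m::finite+'m)+'d::finite)^'e::finite"
  assumes "clin a" "clin b" "clin e"
  shows "clin (\<lambda>v. k *s (M *v flat3 (a v, (b v, e v))))"
proof (rule clinI)
  fix x y show "k *s (M *v flat3 (a (x + y), (b (x + y), e (x + y)))) =
     k *s (M *v flat3 (a x, (b x, e x))) + k *s (M *v flat3 (a y, (b y, e y)))"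
    by (simp add: vec.linear_add[OF assms(1)] vec.linear_add[OF assms(2)] vec.linear_add[OF assms(3)]
        flat3_add matrix_vector_right_distrib vector_add_ldistrib)
next
  fix c x show "k *s (M *v flat3 (a (c *s x), (b (c *s x), e (c *s x)))) = c *s (k *s (M *v flat3 (a x, (b x, e x))))"
    by (simp add: vec.linear_scale[OF assms(1)] vec.linear_scale[OF assms(2)] vec.linear_scale[OF assms(3)]
        flat3_scale mv_scale vec_eq_iff)
qed

lemma col_cd:
  assumes "cd (\<lambda>c. F (ws(j := vupd (ws j) i c))) (ws j $ i) v"
  shows "(\<chi> r. deriv (\<lambda>c. F (ws(j := vupd (ws j) i c)) $ r) (ws j $ i)) = v"
  using cd_deriv[OF assms] .

lemma rank_dep:
  assumes "dep n F" "\<forall>j\<in>{1..n}. ws j = ws' j"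
  shows "rank_at F n ws = rank_at F n ws'"
proof -
  have eqF: "F (ws(j := x)) = F (ws'(j := x))" if "j \<in> {1..n}" for j x
    using assms unfolding dep_def by auto
  define C where "C w j i = (\<chi> r. deriv (\<lambda>c. F (w(j := vupd (w j) i c)) $ r) (w j $ i))" for w j i
  have J: "jac_cols F n w = {C w j i | j i. j \<in> {1..n}}" for w unfolding jac_cols_def C_def ..
  have col: "C ws j i = C ws' j i" if "j \<in> {1..n}" for j i
    unfolding C_def using eqF[OF that] assms(2) that by simp
  have "jac_cols F n ws = jac_cols F n ws'"
    unfolding J
  proof (intro Collect_cong iffI)
    fix x assume "\<exists>j i. x = C ws j i \<and> j \<in> {1..n}"
    then obtain j i where "x = C ws j i" "j \<in> {1..n}" by blast
    then show "\<exists>j i. x = C ws' j i \<and> j \<in> {1..n}" using col by blast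
  next
    fix x assume "\<exists>j i. x = C ws' j i \<and> j \<in> {1..n}"
    then obtain j i where "x = C ws' j i" "j \<in> {1..n}" by blast
    then show "\<exists>j i. x = C ws j i \<and> j \<in> {1..n}" using col by metis
  qed
  then show ?thesis by (simp add: rank_at_def)
qed

lemma rank_le: "rank_at (F :: (nat \<Rightarrow> complex^'m::finite) \<Rightarrow> complex^'r::finite) k ws \<le> card (cart_basis :: (complex^'r) set)"
  unfolding rank_at_def using vec.dim_subset[of _ UNIV] vec.dim_UNIV by (metis subset_UNIV)

lemma gen_rk_shift:
  fixes F1 :: "(nat \<Rightarrow> complex^'m::finite) \<Rightarrow> complex^'a::finite"
    and F2 :: "(nat \<Rightarrow> complex^'m) \<Rightarrow> complex^'b::finite"
  assumes A: "\<And>\<epsilon>. \<epsilon> > 0 \<Longrightarrow> \<exists>\<epsilon>'>0. \<forall>ws. (\<forall>j\<in>{1..k1}. norm (ws j) < \<epsilon>') \<longrightarrow>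
      (\<exists>ws'. (\<forall>j\<in>{1..k2}. norm (ws' j) < \<epsilon>) \<and> rank_at F1 k1 ws \<le> c + rank_at F2 k2 ws')"
    and B: "\<And>\<epsilon>. \<epsilon> > 0 \<Longrightarrow> \<exists>\<epsilon>'>0. \<forall>ws. (\<forall>j\<in>{1..k2}. norm (ws j) < \<epsilon>') \<longrightarrow>
      (\<exists>ws'. (\<forall>j\<in>{1..k1}. norm (ws' j) < \<epsilon>) \<and> c + rank_at F2 k2 ws \<le> rank_at F1 k1 ws')"
  shows "gen_rk F1 k1 = c + gen_rk F2 k2"
proof -
  define P1 where "P1 r \<longleftrightarrow> (\<forall>\<epsilon>>0. \<exists>ws. (\<forall>j\<in>{1..k1}. norm (ws j) < \<epsilon>) \<and> r \<le> rank_at F1 k1 ws)" for r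
  define P2 where "P2 r \<longleftrightarrow> (\<forall>\<epsilon>>0. \<exists>ws. (\<forall>j\<in>{1..k2}. norm (ws j) < \<epsilon>) \<and> r \<le> rank_at F2 k2 ws)" for r
  have g1: "gen_rk F1 k1 = (GREATEST r. P1 r)" unfolding gen_rk_def P1_def ..
  have g2: "gen_rk F2 k2 = (GREATEST r. P2 r)" unfolding gen_rk_def P2_def ..
  have bound: "r \<le> card (cart_basis :: (complex^'b) set)" if "P2 r" for r
  proof -
    have "\<exists>ws. (\<forall>j\<in>{1..k2}. norm (ws j) < 1) \<and> r \<le> rank_at F2 k2 ws" using that unfolding P2_def by simp
    then obtain ws where "r \<le> rank_at F2 k2 ws" by blast
    then show ?thesis using rank_le[of F2 k2 ws] by linarith
  qed
  have P20: "P2 0" unfolding P2_def by (auto intro!: exI[of _ "\<lambda>_. 0"])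
  define g where "g = (GREATEST r. P2 r)"
  have Pg: "P2 g" unfolding g_def by (rule GreatestI_nat[where P=P2, OF P20]) (use bound in blast)
  have gmax: "r \<le> g" if "P2 r" for r unfolding g_def by (rule Greatest_le_nat[where P=P2, OF that]) (use bound in blast)
  have "P1 (c + g)" unfolding P1_def
  proof (intro allI impI)
    fix \<epsilon> :: real assume "\<epsilon> > 0"
    obtain \<epsilon>' where e': "\<epsilon>' > 0" "\<forall>ws. (\<forall>j\<in>{1..k2}. norm (ws j) < \<epsilon>') \<longrightarrow>
      (\<exists>ws'. (\<forall>j\<in>{1..k1}. norm (ws' j) < \<epsilon>) \<and> c + rank_at F2 k2 ws \<le> rank_at F1 k1 ws')"
      using B[OF \<open>\<epsilon> > 0\<close>] by blast
    obtain ws where ws: "\<forall>j\<in>{1..k2}. norm (ws j) < \<epsilon>'" "g \<le> rank_at F2 k2 ws"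
      using Pg e'(1) unfolding P2_def by blast
    obtain ws' where "\<forall>j\<in>{1..k1}. norm (ws' j) < \<epsilon>" "c + rank_at F2 k2 ws \<le> rank_at F1 k1 ws'"
      using e'(2) ws(1) by blast
    then show "\<exists>ws. (\<forall>j\<in>{1..k1}. norm (ws j) < \<epsilon>) \<and> c + g \<le> rank_at F1 k1 ws"
      using ws(2) by (intro exI[of _ ws']) auto
  qed
  moreover have "r \<le> c + g" if P1r: "P1 r" for r
  proof -
    have "P2 (r - c)" unfolding P2_def
    proof (intro allI impI)
      fix \<epsilon> :: real assume "\<epsilon> > 0"
      obtain \<epsilon>' where e': "\<epsilon>' > 0" "\<forall>ws. (\<forall>j\<in>{1..k1}. norm (ws j) < \<epsilon>') \<longrightarrow>
        (\<exists>ws'. (\<forall>j\<in>{1..k2}. norm (ws' j) < \<epsilon>) \<and> rank_at F1 k1 ws \<le> c + rank_at F2 k2 ws')"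
        using A[OF \<open>\<epsilon> > 0\<close>] by blast
      obtain ws where ws: "\<forall>j\<in>{1..k1}. norm (ws j) < \<epsilon>'" "r \<le> rank_at F1 k1 ws"
        using P1r e'(1) unfolding P1_def by blast
      obtain ws' where "\<forall>j\<in>{1..k2}. norm (ws' j) < \<epsilon>" "rank_at F1 k1 ws \<le> c + rank_at F2 k2 ws'"
        using e'(2) ws(1) by blast
      then show "\<exists>ws. (\<forall>j\<in>{1..k2}. norm (ws j) < \<epsilon>) \<and> r - c \<le> rank_at F2 k2 ws"
        using ws(2) by (intro exI[of _ ws']) auto
    qed
    then show ?thesis using gmax by fastforce
  qed
  ultimately have "(GREATEST r. P1 r) = c + g" by (intro Greatest_equality) auto
  then show ?thesis using g1 g2 g_def by simp
qed

lemma flat_t_0[simp]: "flat_t 0 = 0"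
  by (simp add: flat_t_def vec_eq_iff split: sum.split)

lemma good_parts:
  assumes "good n G"
  shows "dep n G" "\<forall>\<epsilon>>0. \<exists>\<delta>>0. \<forall>ws. sm \<delta> n ws \<longrightarrow> norm (G ws) < \<epsilon>"
    "\<exists>\<delta>>0. \<forall>ws. sm \<delta> n ws \<longrightarrow> (\<forall>j i. \<exists>v. D4 (pth G ws j i) (ws j $ i) v)"
  using assms by (auto simp: good_def)

lemma jac_pth:
  "jac_cols F k ws = {(\<chi> r. deriv (\<lambda>c. pth F ws j i c $ r) (ws j $ i)) | j i. j \<in> {1..k}}"
  unfolding jac_cols_def pth_def ..

lemma set_split_Suc:
  "{f j i | j i. j \<in> {1..Suc n}} = {f j i | j i. j \<in> {1..n}} \<union> range (f (Suc n))"
  by (auto simp: le_Suc_eq)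

lemma image_setof: "g ` {f j i | j i. j \<in> A} = {g (f j i) | j i. j \<in> A}" by blast

lemma rank_step_L:
  fixes \<Theta> :: "complex^'m::finite \<Rightarrow> complex^'m \<Rightarrow> complex^'d::finite \<Rightarrow> complex^'d"
  assumes hol: "holomorphic_near_0 \<Theta>" and g: "good n G"
  shows "\<exists>\<delta>>0. \<forall>ws. sm \<delta> (Suc n) ws \<longrightarrow>
     rank_at (\<lambda>ws. flat_pt (Lflow \<Theta> (ws (Suc n)) (G ws))) (Suc n) ws = CARD('m) + rank_at (\<lambda>ws. flat_t (snd (G ws))) n ws"
proof -
  note gp = good_parts[OF g]
  obtain r where r: "r > 0" "\<And>x. norm x < r \<Longrightarrow> \<exists>A. (Tf \<Theta> has_derivative (\<lambda>h. A *v flat3 h)) (at x)"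
    using hol_ball[OF hol] by blast
  have tri: "norm (fst (fst p) + w, snd p) \<le> 2 * norm p + norm w" for p :: "('m,'d) cpt2" and w
  proof -
    have "norm (fst (fst p) + w, snd p) \<le> norm (fst (fst p) + w) + norm (snd p)" by (rule norm_Pair_le)
    also have "\<dots> \<le> norm (fst (fst p)) + norm w + norm (snd p)" using norm_triangle_ineq by simp
    finally show ?thesis using norm_parts[of p] by simp
  qed
  obtain \<delta>d where \<delta>d: "\<delta>d > 0" "\<And>ws. sm \<delta>d n ws \<Longrightarrow> (\<forall>j i. \<exists>v. D4 (pth G ws j i) (ws j $ i) v)" using gp(3) by blast
  obtain \<delta>s where \<delta>s: "\<delta>s > 0" "\<And>ws. sm \<delta>s n ws \<Longrightarrow> norm (G ws) < r / 4" using gp(2) r(1)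
    by (metis divide_pos_pos zero_less_numeral)
  show ?thesis
  proof (intro exI[of _ "min \<delta>d (min \<delta>s (r / 4))"] conjI allI impI)
    show "min \<delta>d (min \<delta>s (r / 4)) > 0" using \<delta>d \<delta>s r by simp
    fix ws :: "nat \<Rightarrow> complex^'m" assume ws: "sm (min \<delta>d (min \<delta>s (r / 4))) (Suc n) ws"
    have np: "norm (G ws) < r / 4" using \<delta>s(2) sm_mono[OF ws] by simp
    have nw: "norm (ws (Suc n)) < r / 4" using sm_Suc[OF ws] by simp
    have "norm (fst (fst (G ws)) + ws (Suc n), snd (G ws)) < r"
      using tri[of "G ws" "ws (Suc n)"] np nw norm_ge_zero[of "G ws"] by linarith
    then obtain A where A: "(Tf \<Theta> has_derivative (\<lambda>h. A *v flat3 h))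
        (at (cj (fst (fst (G ws)) + ws (Suc n)), (cj (fst (snd (G ws))), cj (snd (snd (G ws))))))"
      using r(2) norm_cj3 by (metis prod.collapse)
    have Dex: "\<forall>j i. \<exists>v. D4 (pth G ws j i) (ws j $ i) v" using \<delta>d(2) sm_mono[OF ws] by simp
    define V where "V j i = (if j \<in> {1..n} then (SOME v. D4 (pth G ws j i) (ws j $ i) v) else 0)" for j i
    have DV: "D4 (pth G ws j i) (ws j $ i) (V j i)" for j i
    proof (cases "j \<in> {1..n}")
      case True show ?thesis unfolding V_def if_P[OF True] by (rule someI_ex[OF Dex[rule_format, of j i]])
    next
      case False show ?thesis unfolding V_def if_not_P[OF False] dep_pth[OF gp(1) False] by (rule D4_const)
    qed
    define vw where "vw j i = (if j = Suc n then axis i 1 else (0::complex^'m))" for j i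
    have cw: "cd (\<lambda>c. (ws(j := vupd (ws j) i c)) (Suc n)) (ws j $ i) (vw j i)" for j i
      by (cases "j = Suc n") (simp_all add: vw_def cd_vupd cd_const)
    define v' where "v' j i = ((fst (fst (V j i)) + vw j i, snd (snd (V j i)) + \<i> *s (cjm A *v flat3 (fst (fst (V j i)) + vw j i, (fst (snd (V j i)), snd (snd (V j i)))))), snd (V j i))" for j i
    define G' where "G' = (\<lambda>ws. Lflow \<Theta> (ws (Suc n)) (G ws))"
    have D': "D4 (pth G' ws j i) (ws j $ i) (v' j i)" for j i
    proof -
      have eq: "pth G' ws j i = (\<lambda>c. Lflow \<Theta> ((ws(j := vupd (ws j) i c)) (Suc n)) (pth G ws j i c))"
        by (simp add: pth_def G'_def)
      have hd: "(Tf \<Theta> has_derivative (\<lambda>h. A *v flat3 h))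
          (at (cj (fst (fst (pth G ws j i (ws j $ i))) + (ws(j := vupd (ws j) i (ws j $ i))) (Suc n)),
            (cj (fst (snd (pth G ws j i (ws j $ i)))), cj (snd (snd (pth G ws j i (ws j $ i)))))))"
        using A by simp
      show ?thesis unfolding eq v'_def by (rule D4_Lflow[OF DV cw hd])
    qed
    have col1: "(\<chi> r. deriv (\<lambda>c. pth (\<lambda>ws. flat_pt (G' ws)) ws j i c $ r) (ws j $ i)) = flat_pt (v' j i)" for j i
      using cd_deriv[OF D4_flat(1)[OF D'[of j i]]] by (simp add: pth_def)
    have col2: "(\<chi> r. deriv (\<lambda>c. pth (\<lambda>ws. flat_t (snd (G ws))) ws j i c $ r) (ws j $ i)) = flat_t (snd (V j i))" for j i
      using cd_deriv[OF D4_flat(2)[OF DV[of j i]]] by (simp add: pth_def)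
    define C1 where "C1 = {flat_pt (v' j i) | j i. j \<in> {1..n}}"
    define c where "c i = flat_pt (v' (Suc n) i)" for i
    have J1: "jac_cols (\<lambda>ws. flat_pt (G' ws)) (Suc n) ws = C1 \<union> range c"
      unfolding jac_pth col1 C1_def c_def by (rule set_split_Suc)
    have J2: "jac_cols (\<lambda>ws. flat_t (snd (G ws))) n ws = ptau ` C1"
      unfolding jac_pth col2 C1_def image_setof by (simp add: v'_def)
    define S where "S = {v. pz v = pxi v + \<i> *s (cjm A *v flat3 (pw v, (pze v, pxi v)))}"
    have subS: "vec.subspace S" unfolding S_def
      by (rule subspace_lin_eq[OF p_lin(2) p_lin(4) clin_Z[OF p_lin(1) p_lin(3) p_lin(4)]])
    have inS: "flat_pt (v' j i) \<in> S" for j i unfolding S_def v'_def by simp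
    have "vec.dim (C1 \<union> range c) = CARD('m) + vec.dim (ptau ` C1)"
    proof (rule rank_split[OF p_lin(6) p_lin(1) subS])
      show "C1 \<subseteq> S" unfolding C1_def using inS by blast
      show "range c \<subseteq> S" unfolding c_def using inS by blast
      show "ptau (c i) = 0" for i unfolding c_def v'_def V_def by simp
      show "pw (c i) = axis i 1" for i unfolding c_def v'_def V_def vw_def by simp
      fix v assume "v \<in> S" "ptau v = 0" "pw v = 0"
      then show "v = 0" unfolding S_def ptau_0 by (auto intro: v_0)
    qed
    then show "rank_at (\<lambda>ws. flat_pt (Lflow \<Theta> (ws (Suc n)) (G ws))) (Suc n) ws = CARD('m) + rank_at (\<lambda>ws. flat_t (snd (G ws))) n ws"
      using J1 J2 unfolding rank_at_def G'_def by simp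
  qed
qed


lemma rank_step_Lb:
  fixes \<Theta> :: "complex^'m::finite \<Rightarrow> complex^'m \<Rightarrow> complex^'d::finite \<Rightarrow> complex^'d"
  assumes hol: "holomorphic_near_0 \<Theta>" and g: "good n G"
  shows "\<exists>\<delta>>0. \<forall>ws. sm \<delta> (Suc n) ws \<longrightarrow>
     rank_at (\<lambda>ws. flat_pt (Lbarflow \<Theta> (ws (Suc n)) (G ws))) (Suc n) ws = CARD('m) + rank_at (\<lambda>ws. flat_t (fst (G ws))) n ws"
proof -
  note gp = good_parts[OF g]
  obtain r where r: "r > 0" "\<And>x. norm x < r \<Longrightarrow> \<exists>A. (Tf \<Theta> has_derivative (\<lambda>h. A *v flat3 h)) (at x)"
    using hol_ball[OF hol] by blast
  have tri: "norm (fst (snd p) + w, fst p) \<le> 2 * norm p + norm w" for p :: "('m,'d) cpt2" and w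
  proof -
    have "norm (fst (snd p) + w, fst p) \<le> norm (fst (snd p) + w) + norm (fst p)" by (rule norm_Pair_le)
    also have "\<dots> \<le> norm (fst (snd p)) + norm w + norm (fst p)" using norm_triangle_ineq by simp
    finally show ?thesis using norm_parts[of p] by simp
  qed
  obtain \<delta>d where \<delta>d: "\<delta>d > 0" "\<And>ws. sm \<delta>d n ws \<Longrightarrow> (\<forall>j i. \<exists>v. D4 (pth G ws j i) (ws j $ i) v)" using gp(3) by blast
  obtain \<delta>s where \<delta>s: "\<delta>s > 0" "\<And>ws. sm \<delta>s n ws \<Longrightarrow> norm (G ws) < r / 4" using gp(2) r(1)
    by (metis divide_pos_pos zero_less_numeral)
  show ?thesis
  proof (intro exI[of _ "min \<delta>d (min \<delta>s (r / 4))"] conjI allI impI)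
    show "min \<delta>d (min \<delta>s (r / 4)) > 0" using \<delta>d \<delta>s r by simp
    fix ws :: "nat \<Rightarrow> complex^'m" assume ws: "sm (min \<delta>d (min \<delta>s (r / 4))) (Suc n) ws"
    have np: "norm (G ws) < r / 4" using \<delta>s(2) sm_mono[OF ws] by simp
    have nw: "norm (ws (Suc n)) < r / 4" using sm_Suc[OF ws] by simp
    have "norm (fst (snd (G ws)) + ws (Suc n), fst (G ws)) < r"
      using tri[of "G ws" "ws (Suc n)"] np nw norm_ge_zero[of "G ws"] by linarith
    then obtain A where A: "(Tf \<Theta> has_derivative (\<lambda>h. A *v flat3 h))
        (at (fst (snd (G ws)) + ws (Suc n), (fst (fst (G ws)), snd (fst (G ws)))))"
      using r(2) by (metis prod.collapse)
    have Dex: "\<forall>j i. \<exists>v. D4 (pth G ws j i) (ws j $ i) v" using \<delta>d(2) sm_mono[OF ws] by simp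
    define V where "V j i = (if j \<in> {1..n} then (SOME v. D4 (pth G ws j i) (ws j $ i) v) else 0)" for j i
    have DV: "D4 (pth G ws j i) (ws j $ i) (V j i)" for j i
    proof (cases "j \<in> {1..n}")
      case True show ?thesis unfolding V_def if_P[OF True] by (rule someI_ex[OF Dex[rule_format, of j i]])
    next
      case False show ?thesis unfolding V_def if_not_P[OF False] dep_pth[OF gp(1) False] by (rule D4_const)
    qed
    define vw where "vw j i = (if j = Suc n then axis i 1 else (0::complex^'m))" for j i
    have cw: "cd (\<lambda>c. (ws(j := vupd (ws j) i c)) (Suc n)) (ws j $ i) (vw j i)" for j i
      by (cases "j = Suc n") (simp_all add: vw_def cd_vupd cd_const)
    define v' where "v' j i = (fst (V j i), (fst (snd (V j i)) + vw j i, snd (fst (V j i)) - \<i> *s (A *v flat3 (fst (snd (V j i)) + vw j i, (fst (fst (V j i)), snd (fst (V j i)))))))" for j i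
    define G' where "G' = (\<lambda>ws. Lbarflow \<Theta> (ws (Suc n)) (G ws))"
    have D': "D4 (pth G' ws j i) (ws j $ i) (v' j i)" for j i
    proof -
      have eq: "pth G' ws j i = (\<lambda>c. Lbarflow \<Theta> ((ws(j := vupd (ws j) i c)) (Suc n)) (pth G ws j i c))"
        by (simp add: pth_def G'_def)
      have hd: "(Tf \<Theta> has_derivative (\<lambda>h. A *v flat3 h))
          (at (fst (snd (pth G ws j i (ws j $ i))) + (ws(j := vupd (ws j) i (ws j $ i))) (Suc n),
            (fst (fst (pth G ws j i (ws j $ i))), snd (fst (pth G ws j i (ws j $ i))))))"
        using A by simp
      show ?thesis unfolding eq v'_def by (rule D4_Lbar[OF DV cw hd])
    qed
    have col1: "(\<chi> r. deriv (\<lambda>c. pth (\<lambda>ws. flat_pt (G' ws)) ws j i c $ r) (ws j $ i)) = flat_pt (v' j i)" for j i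
      using cd_deriv[OF D4_flat(1)[OF D'[of j i]]] by (simp add: pth_def)
    have col2: "(\<chi> r. deriv (\<lambda>c. pth (\<lambda>ws. flat_t (fst (G ws))) ws j i c $ r) (ws j $ i)) = flat_t (fst (V j i))" for j i
      using cd_deriv[OF D4_flat(3)[OF DV[of j i]]] by (simp add: pth_def)
    define C1 where "C1 = {flat_pt (v' j i) | j i. j \<in> {1..n}}"
    define c where "c i = flat_pt (v' (Suc n) i)" for i
    have J1: "jac_cols (\<lambda>ws. flat_pt (G' ws)) (Suc n) ws = C1 \<union> range c"
      unfolding jac_pth col1 C1_def c_def by (rule set_split_Suc)
    have J2: "jac_cols (\<lambda>ws. flat_t (fst (G ws))) n ws = pt ` C1"
      unfolding jac_pth col2 C1_def image_setof by (simp add: v'_def)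
    define S where "S = {v. pxi v = pz v + (- \<i>) *s (A *v flat3 (pze v, (pw v, pz v)))}"
    have subS: "vec.subspace S" unfolding S_def
      by (rule subspace_lin_eq[OF p_lin(4) p_lin(2) clin_Z[OF p_lin(3) p_lin(1) p_lin(2)]])
    have inS: "flat_pt (v' j i) \<in> S" for j i unfolding S_def v'_def by (simp add: vec_eq_iff)
    have "vec.dim (C1 \<union> range c) = CARD('m) + vec.dim (pt ` C1)"
    proof (rule rank_split[OF p_lin(5) p_lin(3) subS])
      show "C1 \<subseteq> S" unfolding C1_def using inS by blast
      show "range c \<subseteq> S" unfolding c_def using inS by blast
      show "pt (c i) = 0" for i unfolding c_def v'_def V_def by simp
      show "pze (c i) = axis i 1" for i unfolding c_def v'_def V_def vw_def by simp
      fix v assume "v \<in> S" "pt v = 0" "pze v = 0"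
      then show "v = 0" unfolding S_def pt_0 by (auto intro: v_0)
    qed
    then show "rank_at (\<lambda>ws. flat_pt (Lbarflow \<Theta> (ws (Suc n)) (G ws))) (Suc n) ws = CARD('m) + rank_at (\<lambda>ws. flat_t (fst (G ws))) n ws"
      using J1 J2 unfolding rank_at_def G'_def by simp
  qed
qed


lemma gen_step_generic:
  fixes F1 :: "(nat \<Rightarrow> complex^'m::finite) \<Rightarrow> complex^'a::finite"
    and F2 :: "(nat \<Rightarrow> complex^'m) \<Rightarrow> complex^'b::finite"
  assumes rs: "\<exists>\<delta>>0. \<forall>ws. sm \<delta> (Suc n) ws \<longrightarrow> rank_at F1 (Suc n) ws = CARD('m) + rank_at F2 n ws"
    and d: "dep n F2"
  shows "gen_rk F1 (Suc n) = CARD('m) + gen_rk F2 n"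
proof -
  obtain \<delta> where \<delta>: "\<delta> > 0" "\<And>ws. sm \<delta> (Suc n) ws \<Longrightarrow> rank_at F1 (Suc n) ws = CARD('m) + rank_at F2 n ws"
    using rs by blast
  show ?thesis
  proof (rule gen_rk_shift)
    fix \<epsilon> :: real assume e: "\<epsilon> > 0"
    show "\<exists>\<epsilon>'>0. \<forall>ws. (\<forall>j\<in>{1..Suc n}. norm (ws j) < \<epsilon>') \<longrightarrow>
      (\<exists>ws'. (\<forall>j\<in>{1..n}. norm (ws' j) < \<epsilon>) \<and> rank_at F1 (Suc n) ws \<le> CARD('m) + rank_at F2 n ws')"
    proof (intro exI[of _ "min \<epsilon> \<delta>"] conjI allI impI)
      show "min \<epsilon> \<delta> > 0" using e \<delta> by simp
      fix ws :: "nat \<Rightarrow> complex^'m" assume ws: "\<forall>j\<in>{1..Suc n}. norm (ws j) < min \<epsilon> \<delta>"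
      then have "sm \<delta> (Suc n) ws" unfolding sm_def by auto
      then show "\<exists>ws'. (\<forall>j\<in>{1..n}. norm (ws' j) < \<epsilon>) \<and> rank_at F1 (Suc n) ws \<le> CARD('m) + rank_at F2 n ws'"
        using ws \<delta>(2) by (intro exI[of _ ws]) auto
    qed
  next
    fix \<epsilon> :: real assume e: "\<epsilon> > 0"
    show "\<exists>\<epsilon>'>0. \<forall>ws. (\<forall>j\<in>{1..n}. norm (ws j) < \<epsilon>') \<longrightarrow>
      (\<exists>ws'. (\<forall>j\<in>{1..Suc n}. norm (ws' j) < \<epsilon>) \<and> CARD('m) + rank_at F2 n ws \<le> rank_at F1 (Suc n) ws')"
    proof (intro exI[of _ "min \<epsilon> \<delta>"] conjI allI impI)
      show "min \<epsilon> \<delta> > 0" using e \<delta> by simp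
      fix ws :: "nat \<Rightarrow> complex^'m" assume ws: "\<forall>j\<in>{1..n}. norm (ws j) < min \<epsilon> \<delta>"
      define ws' where "ws' = ws(Suc n := 0)"
      have n': "\<forall>j\<in>{1..Suc n}. norm (ws' j) < min \<epsilon> \<delta>"
        using ws e \<delta>(1) unfolding ws'_def by (auto simp: le_Suc_eq)
      then have "sm \<delta> (Suc n) ws'" unfolding sm_def by auto
      then have "rank_at F1 (Suc n) ws' = CARD('m) + rank_at F2 n ws'" by (rule \<delta>(2))
      moreover have "rank_at F2 n ws' = rank_at F2 n ws"
        by (rule rank_dep[OF d]) (auto simp: ws'_def)
      ultimately show "\<exists>ws'. (\<forall>j\<in>{1..Suc n}. norm (ws' j) < \<epsilon>) \<and> CARD('m) + rank_at F2 n ws \<le> rank_at F1 (Suc n) ws'"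
        using n' by (intro exI[of _ ws']) auto
    qed
  qed
qed

lemma good_0: "good 0 (\<lambda>ws. (0::('m::finite,'d::finite) cpt2))"
proof -
  have "pth (\<lambda>ws. (0::('m,'d) cpt2)) ws j i = (\<lambda>c. 0)" for ws j i by (simp add: pth_def)
  then have "\<forall>ws. sm 1 0 ws \<longrightarrow> (\<forall>j i. \<exists>v. D4 (pth (\<lambda>ws. (0::('m,'d) cpt2)) ws j i) (ws j $ i) v)"
    by (intro allI impI exI[of _ 0]) (simp add: pth_def D4_const)
  then show ?thesis unfolding good_def dep_def by (auto intro!: exI[of _ "1::real"])
qed

lemma good_Gamma:
  fixes \<Theta> :: "complex^'m::finite \<Rightarrow> complex^'m \<Rightarrow> complex^'d::finite \<Rightarrow> complex^'d"
  assumes hol: "holomorphic_near_0 \<Theta>" and orig: "\<Theta> 0 0 0 = 0"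
  shows "good n (Gamma \<Theta> n)"
proof (induction n)
  case 0
  have "Gamma \<Theta> 0 = (\<lambda>ws. 0)" by (rule ext) simp
  then show ?case using good_0 by simp
next
  case (Suc n)
  show ?case
  proof (cases "odd (Suc n)")
    case True
    then have "Gamma \<Theta> (Suc n) = (\<lambda>ws. Lflow \<Theta> (ws (Suc n)) (Gamma \<Theta> n ws))" by (intro ext) simp
    then show ?thesis using good_step_L[OF hol orig Suc.IH] by simp
  next
    case False
    then have "Gamma \<Theta> (Suc n) = (\<lambda>ws. Lbarflow \<Theta> (ws (Suc n)) (Gamma \<Theta> n ws))" by (intro ext) simp
    then show ?thesis using good_step_Lb[OF hol orig Suc.IH] by simp
  qed
qed

lemma good_Gamma_u:
  fixes \<Theta> :: "complex^'m::finite \<Rightarrow> complex^'m \<Rightarrow> complex^'d::finite \<Rightarrow> complex^'d"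
  assumes hol: "holomorphic_near_0 \<Theta>" and orig: "\<Theta> 0 0 0 = 0"
  shows "good n (Gamma_u \<Theta> n)"
proof (induction n)
  case 0
  have "Gamma_u \<Theta> 0 = (\<lambda>ws. 0)" by (rule ext) simp
  then show ?case using good_0 by simp
next
  case (Suc n)
  show ?case
  proof (cases "odd (Suc n)")
    case True
    then have "Gamma_u \<Theta> (Suc n) = (\<lambda>ws. Lbarflow \<Theta> (ws (Suc n)) (Gamma_u \<Theta> n ws))" by (intro ext) simp
    then show ?thesis using good_step_Lb[OF hol orig Suc.IH] by simp
  next
    case False
    then have "Gamma_u \<Theta> (Suc n) = (\<lambda>ws. Lflow \<Theta> (ws (Suc n)) (Gamma_u \<Theta> n ws))" by (intro ext) simp
    then show ?thesis using good_step_L[OF hol orig Suc.IH] by simp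
  qed
qed

lemma dep_comp: "dep n G \<Longrightarrow> dep n (\<lambda>ws. f (G ws))"
  unfolding dep_def by metis

lemma step_Gamma:
  fixes \<Theta> :: "complex^'m::finite \<Rightarrow> complex^'m \<Rightarrow> complex^'d::finite \<Rightarrow> complex^'d"
  assumes hol: "holomorphic_near_0 \<Theta>" and orig: "\<Theta> 0 0 0 = 0"
  shows "gen_rk (\<lambda>ws. flat_pt (Gamma \<Theta> (Suc n) ws)) (Suc n) = CARD('m) + gen_rk (\<lambda>ws. flat_t (psi \<Theta> n ws)) n"
proof -
  note g = good_Gamma[OF hol orig, of n]
  have dg: "dep n (Gamma \<Theta> n)" using g by (simp add: good_def)
  show ?thesis
  proof (cases "even n")
    case True
    have e1: "(\<lambda>ws. flat_pt (Gamma \<Theta> (Suc n) ws)) = (\<lambda>ws. flat_pt (Lflow \<Theta> (ws (Suc n)) (Gamma \<Theta> n ws)))"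
      using True by (intro ext) simp
    have e2: "(\<lambda>ws. flat_t (psi \<Theta> n ws)) = (\<lambda>ws. flat_t (snd (Gamma \<Theta> n ws)))"
      using True by (intro ext) (simp add: psi_def)
    show ?thesis unfolding e1 e2
      by (rule gen_step_generic[OF rank_step_L[OF hol g] dep_comp[OF dg]])
  next
    case False
    have e1: "(\<lambda>ws. flat_pt (Gamma \<Theta> (Suc n) ws)) = (\<lambda>ws. flat_pt (Lbarflow \<Theta> (ws (Suc n)) (Gamma \<Theta> n ws)))"
      using False by (intro ext) simp
    have e2: "(\<lambda>ws. flat_t (psi \<Theta> n ws)) = (\<lambda>ws. flat_t (fst (Gamma \<Theta> n ws)))"
      using False by (intro ext) (simp add: psi_def)
    show ?thesis unfolding e1 e2
      by (rule gen_step_generic[OF rank_step_Lb[OF hol g] dep_comp[OF dg]])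
  qed
qed

lemma step_Gamma_u:
  fixes \<Theta> :: "complex^'m::finite \<Rightarrow> complex^'m \<Rightarrow> complex^'d::finite \<Rightarrow> complex^'d"
  assumes hol: "holomorphic_near_0 \<Theta>" and orig: "\<Theta> 0 0 0 = 0"
  shows "gen_rk (\<lambda>ws. flat_pt (Gamma_u \<Theta> (Suc n) ws)) (Suc n) = CARD('m) + gen_rk (\<lambda>ws. flat_t (psi_u \<Theta> n ws)) n"
proof -
  note g = good_Gamma_u[OF hol orig, of n]
  have dg: "dep n (Gamma_u \<Theta> n)" using g by (simp add: good_def)
  show ?thesis
  proof (cases "even n")
    case True
    have e1: "(\<lambda>ws. flat_pt (Gamma_u \<Theta> (Suc n) ws)) = (\<lambda>ws. flat_pt (Lbarflow \<Theta> (ws (Suc n)) (Gamma_u \<Theta> n ws)))"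
      using True by (intro ext) simp
    have e2: "(\<lambda>ws. flat_t (psi_u \<Theta> n ws)) = (\<lambda>ws. flat_t (fst (Gamma_u \<Theta> n ws)))"
      using True by (intro ext) (simp add: psi_u_def)
    show ?thesis unfolding e1 e2
      by (rule gen_step_generic[OF rank_step_Lb[OF hol g] dep_comp[OF dg]])
  next
    case False
    have e1: "(\<lambda>ws. flat_pt (Gamma_u \<Theta> (Suc n) ws)) = (\<lambda>ws. flat_pt (Lflow \<Theta> (ws (Suc n)) (Gamma_u \<Theta> n ws)))"
      using False by (intro ext) simp
    have e2: "(\<lambda>ws. flat_t (psi_u \<Theta> n ws)) = (\<lambda>ws. flat_t (snd (Gamma_u \<Theta> n ws)))"
      using False by (intro ext) (simp add: psi_u_def)
    show ?thesis unfolding e1 e2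
      by (rule gen_step_generic[OF rank_step_L[OF hol g] dep_comp[OF dg]])
  qed
qed

lemma gen_rk_0: "gen_rk F 0 = 0"
proof -
  have "jac_cols F 0 ws = {}" for ws by (simp add: jac_cols_def)
  then have r0: "rank_at F 0 ws = 0" for ws by (simp add: rank_at_def)
  show ?thesis unfolding gen_rk_def r0
  proof (rule Greatest_equality)
    show "\<forall>\<epsilon>>0. \<exists>ws. (\<forall>j\<in>{1..0}. norm (ws j) < \<epsilon>) \<and> (0::nat) \<le> 0"
      by (auto intro!: exI[of _ "\<lambda>_. 0"])
  next
    fix y :: nat assume "\<forall>\<epsilon>>0. \<exists>ws. (\<forall>j\<in>{1..0}. norm (ws j) < \<epsilon>) \<and> y \<le> 0"
    then show "y \<le> 0" by (metis zero_less_one)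
  qed
qed

definition emb :: "complex^'a::finite \<Rightarrow> complex^('a+'b::finite)" where
  "emb u = (\<chi> s. case s of Inl a \<Rightarrow> u $ a | Inr b \<Rightarrow> 0)"

lemma clin_emb: "clin (emb :: complex^'a::finite \<Rightarrow> complex^('a+'b::finite))"
  by (rule clinI) (auto simp: emb_def vec_eq_iff split: sum.split)

lemma pt_emb: "pt (emb x :: complex^('a::finite+'b::finite)) = x"
  by (simp add: pt_def emb_def vec_eq_iff)

lemma inj_emb: "inj (emb :: complex^'a::finite \<Rightarrow> complex^('a+'b::finite))"
  by (rule inj_on_inverseI[where g=pt]) (rule pt_emb)

lemma dim_emb: "vec.dim ((emb :: complex^'a::finite \<Rightarrow> complex^('a+'b::finite)) ` X) = vec.dim X"
  by (rule vec.dim_image_eq[OF clin_emb]) (use inj_emb in \<open>auto simp: inj_on_def inj_def\<close>)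

lemma col_emb: "(\<chi> r. deriv (\<lambda>c. (emb (f c) :: complex^('a::finite+'b::finite)) $ r) x) = emb (\<chi> a. deriv (\<lambda>c. f c $ a) x)"
  by (simp add: vec_eq_iff emb_def split: sum.split)

lemma gen_rk_emb: "gen_rk (\<lambda>ws. (emb (F ws) :: complex^('a::finite+'b::finite))) k = gen_rk F k"
proof -
  have "rank_at (\<lambda>ws. (emb (F ws) :: complex^('a+'b))) k ws = rank_at F k ws" for ws
  proof -
    have "jac_cols (\<lambda>ws. (emb (F ws) :: complex^('a+'b))) k ws = emb ` jac_cols F k ws"
      unfolding jac_cols_def col_emb image_setof ..
    then show ?thesis unfolding rank_at_def using dim_emb by simp
  qed
  then show ?thesis unfolding gen_rk_def by simp
qed

lemma cj_add[simp]: "cj (a + b) = cj a + cj (b::complex^'n::finite)" by (simp add: cj_def vec_eq_iff)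
lemma cj_diff[simp]: "cj (a - b) = cj a - cj (b::complex^'n::finite)" by (simp add: cj_def vec_eq_iff)
lemma cj_smult[simp]: "cj (k *s (x::complex^'n::finite)) = cnj k *s cj x" by (simp add: cj_def vec_eq_iff)
lemma cj_0[simp]: "cj (0::complex^'n::finite) = 0" by (simp add: cj_def vec_eq_iff)
lemma cj_vupd: "cj (vupd v i c) = vupd (cj v) i (cnj c)" by (simp add: cj_def vupd_def vec_eq_iff)

definition sig :: "('m::finite,'d::finite) cpt2 \<Rightarrow> ('m,'d) cpt2" where
  "sig p = ((cj (fst (snd p)), cj (snd (snd p))), (cj (fst (fst p)), cj (snd (fst p))))"

lemma Lbar_sig: "Lbarflow \<Theta> w (sig p) = sig (Lflow \<Theta> (cj w) p)"
  by (simp add: Lflow_alt Lbar_alt sig_def Theta_bar_def vec_eq_iff)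

lemma Lflow_sig: "Lflow \<Theta> w (sig p) = sig (Lbarflow \<Theta> (cj w) p)"
  by (simp add: Lflow_alt Lbar_alt sig_def Theta_bar_def vec_eq_iff)

lemma sig_0[simp]: "sig 0 = 0" by (simp add: sig_def zero_prod_def)

lemma Gamma_u_sig: "Gamma_u \<Theta> n ws = sig (Gamma \<Theta> n (\<lambda>j. cj (ws j)))"
  by (induction n) (auto simp: Lbar_sig Lflow_sig)

definition swp :: "'a + 'a \<Rightarrow> 'a + 'a" where
  "swp s = (case s of Inl a \<Rightarrow> Inr a | Inr a \<Rightarrow> Inl a)"

definition perm :: "complex^('a::finite+'a) \<Rightarrow> complex^('a+'a)" where
  "perm v = (\<chi> s. v $ swp s)"

lemma flat_sig: "flat_pt (sig p) = perm (cj (flat_pt p))"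
  by (simp add: sig_def perm_def swp_def cj_def flat_pt_def flat_t_def vec_eq_iff split: sum.split)

lemma perm_perm[simp]: "perm (perm v) = v"
  by (simp add: perm_def swp_def vec_eq_iff split: sum.split)

lemma clin_perm: "clin perm"
  by (rule clinI) (simp_all add: perm_def vec_eq_iff)

lemma dim_perm: "vec.dim (perm ` X) = vec.dim X"
  by (rule vec.dim_image_eq[OF clin_perm]) (metis inj_on_inverseI perm_perm)

lemma cd_perm: "cd g c0 v \<Longrightarrow> cd (\<lambda>c. perm (g c)) c0 (perm v)"
  by (simp add: cd_def perm_def)

lemma cj_span: "cj ` vec.span X \<subseteq> vec.span (cj ` (X :: (complex^'n::finite) set))"
proof
  fix y assume "y \<in> cj ` vec.span X"
  then obtain x where x: "x \<in> vec.span X" "y = cj x" by blast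
  have "vec.subspace {x. cj x \<in> vec.span (cj ` X)}"
    unfolding vec.subspace_def by (auto intro: vec.span_add vec.span_scale vec.span_zero)
  then have "cj x \<in> vec.span (cj ` X)"
    using vec.span_induct[OF x(1), of "\<lambda>x. cj x \<in> vec.span (cj ` X)"]
    by (auto intro: vec.span_base)
  then show "y \<in> vec.span (cj ` X)" using x(2) by simp
qed

lemma dim_cj_le: "vec.dim (cj ` X) \<le> vec.dim (X :: (complex^'n::finite) set)"
proof -
  obtain B where B: "B \<subseteq> X" "vec.independent B" "X \<subseteq> vec.span B" "card B = vec.dim X"
    using vec.basis_exists by blast
  have fB: "finite B" using B(2) vec.independent_bound_general by blast
  have "cj ` X \<subseteq> vec.span (cj ` B)" using B(3) cj_span[of B] by blast
  then have "vec.dim (cj ` X) \<le> card (cj ` B)" by (rule vec.dim_le_card) (use fB in simp)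
  also have "\<dots> \<le> card B" using fB by (rule card_image_le)
  finally show ?thesis using B(4) by simp
qed

lemma dim_cj: "vec.dim (cj ` X) = vec.dim (X :: (complex^'n::finite) set)"
proof -
  have "vec.dim X = vec.dim (cj ` cj ` X)" by (simp add: image_image)
  also have "\<dots> \<le> vec.dim (cj ` X)" by (rule dim_cj_le)
  finally show ?thesis using dim_cj_le[of X] by simp
qed

lemma rank_u:
  fixes \<Theta> :: "complex^'m::finite \<Rightarrow> complex^'m \<Rightarrow> complex^'d::finite \<Rightarrow> complex^'d"
  assumes hol: "holomorphic_near_0 \<Theta>" and orig: "\<Theta> 0 0 0 = 0"
  shows "\<exists>\<delta>>0. \<forall>ws. sm \<delta> n ws \<longrightarrow> rank_at (\<lambda>ws. flat_pt (Gamma_u \<Theta> n ws)) n ws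
            = rank_at (\<lambda>ws. flat_pt (Gamma \<Theta> n ws)) n (\<lambda>j. cj (ws j))"
proof -
  note gp = good_parts[OF good_Gamma[OF hol orig, of n]]
  obtain \<delta> where \<delta>: "\<delta> > 0" "\<And>ws. sm \<delta> n ws \<Longrightarrow> (\<forall>j i. \<exists>v. D4 (pth (Gamma \<Theta> n) ws j i) (ws j $ i) v)"
    using gp(3) by blast
  define F where "F = (\<lambda>ws. flat_pt (Gamma \<Theta> n ws))"
  define Fu where "Fu = (\<lambda>ws. flat_pt (Gamma_u \<Theta> n ws))"
  show ?thesis
  proof (intro exI[of _ \<delta>] conjI allI impI)
    show "\<delta> > 0" by (rule \<delta>(1))
    fix ws :: "nat \<Rightarrow> complex^'m" assume ws: "sm \<delta> n ws"
    define cws where "cws = (\<lambda>j. cj (ws j))"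
    have scws: "sm \<delta> n cws" using ws unfolding sm_def cws_def by simp
    have col: "(\<chi> r. deriv (\<lambda>c. pth Fu ws j i c $ r) (ws j $ i))
        = perm (cj (\<chi> r. deriv (\<lambda>c. pth F cws j i c $ r) (cws j $ i)))" for j i
    proof -
      obtain v where v: "D4 (pth (Gamma \<Theta> n) cws j i) (cws j $ i) v" using \<delta>(2)[OF scws] by blast
      have c0: "cws j $ i = cnj (ws j $ i)" by (simp add: cws_def cj_def)
      have pF: "pth F cws j i = (\<lambda>c. flat_pt (pth (Gamma \<Theta> n) cws j i c))"
        by (simp add: pth_def F_def)
      have cdF: "cd (pth F cws j i) (cnj (ws j $ i)) (flat_pt v)"
        unfolding pF using D4_flat(1)[OF v] c0 by simp
      have upd: "(\<lambda>j'. cj ((ws(j := vupd (ws j) i c)) j')) = cws(j := vupd (cws j) i (cnj c))" for c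
        by (rule ext) (simp add: cws_def cj_vupd)
      have pFu: "pth Fu ws j i = (\<lambda>c. perm (cj (pth F cws j i (cnj c))))"
        by (rule ext) (simp only: pth_def Fu_def F_def Gamma_u_sig flat_sig upd)
      have "cd (pth Fu ws j i) (ws j $ i) (perm (cj (flat_pt v)))"
        unfolding pFu by (rule cd_perm[OF cd_cnj[OF cdF]])
      then have "(\<chi> r. deriv (\<lambda>c. pth Fu ws j i c $ r) (ws j $ i)) = perm (cj (flat_pt v))"
        by (rule cd_deriv)
      moreover have "(\<chi> r. deriv (\<lambda>c. pth F cws j i c $ r) (cws j $ i)) = flat_pt v"
        using cd_deriv[OF cdF] c0 by simp
      ultimately show ?thesis by simp
    qed
    have "jac_cols Fu n ws = (\<lambda>x. perm (cj x)) ` jac_cols F n cws"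
      unfolding jac_pth image_setof col ..
    then have "rank_at Fu n ws = rank_at F n cws"
      unfolding rank_at_def by (simp add: image_image[symmetric] dim_perm dim_cj)
    then show "rank_at (\<lambda>ws. flat_pt (Gamma_u \<Theta> n ws)) n ws = rank_at (\<lambda>ws. flat_pt (Gamma \<Theta> n ws)) n (\<lambda>j. cj (ws j))"
      unfolding Fu_def F_def cws_def .
  qed
qed

lemma gen_rk_u:
  fixes \<Theta> :: "complex^'m::finite \<Rightarrow> complex^'m \<Rightarrow> complex^'d::finite \<Rightarrow> complex^'d"
  assumes hol: "holomorphic_near_0 \<Theta>" and orig: "\<Theta> 0 0 0 = 0"
  shows "gen_rk (\<lambda>ws. flat_pt (Gamma_u \<Theta> n ws)) n = gen_rk (\<lambda>ws. flat_pt (Gamma \<Theta> n ws)) n"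
proof -
  obtain \<delta> where \<delta>: "\<delta> > 0" "\<And>ws. sm \<delta> n ws \<Longrightarrow> rank_at (\<lambda>ws. flat_pt (Gamma_u \<Theta> n ws)) n ws
            = rank_at (\<lambda>ws. flat_pt (Gamma \<Theta> n ws)) n (\<lambda>j. cj (ws j))"
    using rank_u[OF hol orig, of n] by blast
  have "gen_rk (\<lambda>ws. flat_pt (Gamma_u \<Theta> n ws)) n = 0 + gen_rk (\<lambda>ws. flat_pt (Gamma \<Theta> n ws)) n"
  proof (rule gen_rk_shift)
    fix \<epsilon> :: real assume e: "\<epsilon> > 0"
    show "\<exists>\<epsilon>'>0. \<forall>ws. (\<forall>j\<in>{1..n}. norm (ws j) < \<epsilon>') \<longrightarrow>
      (\<exists>ws'. (\<forall>j\<in>{1..n}. norm (ws' j) < \<epsilon>) \<and> rank_at (\<lambda>ws. flat_pt (Gamma_u \<Theta> n ws)) n ws \<le> 0 + rank_at (\<lambda>ws. flat_pt (Gamma \<Theta> n ws)) n ws')"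
    proof (intro exI[of _ "min \<epsilon> \<delta>"] conjI allI impI)
      show "min \<epsilon> \<delta> > 0" using e \<delta> by simp
      fix ws :: "nat \<Rightarrow> complex^'m" assume ws: "\<forall>j\<in>{1..n}. norm (ws j) < min \<epsilon> \<delta>"
      then have "sm \<delta> n ws" unfolding sm_def by auto
      then show "\<exists>ws'. (\<forall>j\<in>{1..n}. norm (ws' j) < \<epsilon>) \<and> rank_at (\<lambda>ws. flat_pt (Gamma_u \<Theta> n ws)) n ws \<le> 0 + rank_at (\<lambda>ws. flat_pt (Gamma \<Theta> n ws)) n ws'"
        using ws \<delta>(2) by (intro exI[of _ "\<lambda>j. cj (ws j)"]) auto
    qed
  next
    fix \<epsilon> :: real assume e: "\<epsilon> > 0"
    show "\<exists>\<epsilon>'>0. \<forall>ws. (\<forall>j\<in>{1..n}. norm (ws j) < \<epsilon>') \<longrightarrow>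
      (\<exists>ws'. (\<forall>j\<in>{1..n}. norm (ws' j) < \<epsilon>) \<and> 0 + rank_at (\<lambda>ws. flat_pt (Gamma \<Theta> n ws)) n ws \<le> rank_at (\<lambda>ws. flat_pt (Gamma_u \<Theta> n ws)) n ws')"
    proof (intro exI[of _ "min \<epsilon> \<delta>"] conjI allI impI)
      show "min \<epsilon> \<delta> > 0" using e \<delta> by simp
      fix ws :: "nat \<Rightarrow> complex^'m" assume ws: "\<forall>j\<in>{1..n}. norm (ws j) < min \<epsilon> \<delta>"
      then have "sm \<delta> n (\<lambda>j. cj (ws j))" unfolding sm_def by auto
      from \<delta>(2)[OF this]
      have "rank_at (\<lambda>ws. flat_pt (Gamma_u \<Theta> n ws)) n (\<lambda>j. cj (ws j)) = rank_at (\<lambda>ws. flat_pt (Gamma \<Theta> n ws)) n ws"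
        by simp
      then show "\<exists>ws'. (\<forall>j\<in>{1..n}. norm (ws' j) < \<epsilon>) \<and> 0 + rank_at (\<lambda>ws. flat_pt (Gamma \<Theta> n ws)) n ws \<le> rank_at (\<lambda>ws. flat_pt (Gamma_u \<Theta> n ws)) n ws'"
        using ws by (intro exI[of _ "\<lambda>j. cj (ws j)"]) auto
    qed
  qed
  then show ?thesis by simp
qed

theorem lemma7p14:
  fixes \<Theta> :: "complex^'m::finite \<Rightarrow> complex^'m \<Rightarrow> complex^'d::finite \<Rightarrow> complex^'d"
    and \<kappa> :: nat
  assumes hol: "holomorphic_near_0 \<Theta>"
    and origin: "\<Theta> 0 0 0 = 0"
    and real_eq: "\<exists>V. open V \<and> (0::('m,'d) cpt2) \<in> V \<and>
         (\<forall>w z \<zeta> \<xi>. ((w, z), (\<zeta>, \<xi>)) \<in> V \<longrightarrow>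
            (z = \<xi> + \<i> *s Theta_bar \<Theta> w \<zeta> \<xi> \<longleftrightarrow> \<xi> = z - \<i> *s \<Theta> \<zeta> w z))"
    and kappa: "\<forall>l\<in>{1..\<kappa>}. e_mt \<Theta> l > 0" "\<forall>l>\<kappa>. e_mt \<Theta> l = 0"
  shows
    "(\<forall>k. gen_rk (\<lambda>ws. flat_pt (Gamma \<Theta> (k + 2) ws)) (k + 2)
            = CARD('m) + gen_rk (\<lambda>ws. flat_t (psi \<Theta> (k + 1) ws)) (k + 1))
   \<and> (\<forall>k\<le>\<kappa>. int (gen_rk (\<lambda>ws. flat_t (psi \<Theta> (k + 1) ws)) (k + 1))
            = int CARD('m) + (\<Sum>l=1..k. e_mt \<Theta> l))
   \<and> (\<forall>k\<ge>\<kappa>. int (gen_rk (\<lambda>ws. flat_t (psi \<Theta> (k + 1) ws)) (k + 1))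
            = int CARD('m) + (\<Sum>l=1..\<kappa>. e_mt \<Theta> l))
   \<and> (\<forall>k. gen_rk (\<lambda>ws. flat_pt (Gamma_u \<Theta> (k + 2) ws)) (k + 2)
            = CARD('m) + gen_rk (\<lambda>ws. flat_t (psi_u \<Theta> (k + 1) ws)) (k + 1))
   \<and> (\<forall>k\<le>\<kappa>. int (gen_rk (\<lambda>ws. flat_t (psi_u \<Theta> (k + 1) ws)) (k + 1))
            = int CARD('m) + (\<Sum>l=1..k. e_mt \<Theta> l))
   \<and> (\<forall>k\<ge>\<kappa>. int (gen_rk (\<lambda>ws. flat_t (psi_u \<Theta> (k + 1) ws)) (k + 1))
            = int CARD('m) + (\<Sum>l=1..\<kappa>. e_mt \<Theta> l))"
proof -
  have S: "gen_rk (\<lambda>ws. flat_pt (Gamma \<Theta> (k + 2) ws)) (k + 2) = CARD('m) + gen_rk (\<lambda>ws. flat_t (psi \<Theta> (k + 1) ws)) (k + 1)" for k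
  proof -
    have e: "k + 2 = Suc (k + 1)" by simp
    show ?thesis unfolding e by (rule step_Gamma[OF hol origin])
  qed
  have Su: "gen_rk (\<lambda>ws. flat_pt (Gamma_u \<Theta> (k + 2) ws)) (k + 2) = CARD('m) + gen_rk (\<lambda>ws. flat_t (psi_u \<Theta> (k + 1) ws)) (k + 1)" for k
  proof -
    have e: "k + 2 = Suc (k + 1)" by simp
    show ?thesis unfolding e by (rule step_Gamma_u[OF hol origin])
  qed
  have r1: "r_rk \<Theta> 1 = CARD('m)"
    using step_Gamma[OF hol origin, of 0] gen_rk_0 by (simp add: r_rk_def)
  have fl1: "flat_pt (Gamma \<Theta> 1 ws) = emb (flat_t (psi \<Theta> 1 ws))" for ws
    by (simp add: psi_def Lflow_alt flat_pt_def emb_def vec_eq_iff split: sum.split)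
  have psi1: "gen_rk (\<lambda>ws. flat_t (psi \<Theta> 1 ws)) 1 = CARD('m)"
    using r1 unfolding r_rk_def fl1 gen_rk_emb by simp
  have r2: "r_rk \<Theta> 2 = 2 * CARD('m)"
  proof -
    have "gen_rk (\<lambda>ws. flat_pt (Gamma \<Theta> 2 ws)) 2 = CARD('m) + gen_rk (\<lambda>ws. flat_t (psi \<Theta> 1 ws)) 1"
      using S[of 0] by (simp only: add_0)
    then show ?thesis unfolding r_rk_def psi1 by (simp del: Gamma.simps)
  qed
  have tele: "(\<Sum>l=1..k. e_mt \<Theta> l) = int (r_rk \<Theta> (k + 2)) - int (r_rk \<Theta> 2)" for k
  proof (induction k)
    case 0 then show ?case by (simp add: numeral_2_eq_2)
  next
    case (Suc k)
    have "(\<Sum>l=1..Suc k. e_mt \<Theta> l) = (\<Sum>l=1..k. e_mt \<Theta> l) + e_mt \<Theta> (Suc k)" by simp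
    also have "\<dots> = int (r_rk \<Theta> (Suc k + 2)) - int (r_rk \<Theta> 2)"
      using Suc.IH by (simp add: e_mt_def)
    finally show ?case .
  qed
  have P2: "int (gen_rk (\<lambda>ws. flat_t (psi \<Theta> (k + 1) ws)) (k + 1)) = int CARD('m) + (\<Sum>l=1..k. e_mt \<Theta> l)" for k
    using S[of k] tele[of k] r2 unfolding r_rk_def by simp
  have P2u: "int (gen_rk (\<lambda>ws. flat_t (psi_u \<Theta> (k + 1) ws)) (k + 1)) = int CARD('m) + (\<Sum>l=1..k. e_mt \<Theta> l)" for k
    using Su[of k] gen_rk_u[OF hol origin, of "k + 2"] tele[of k] r2 unfolding r_rk_def by simp
  have stab: "(\<Sum>l=1..\<kappa> + d. e_mt \<Theta> l) = (\<Sum>l=1..\<kappa>. e_mt \<Theta> l)" for d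
  proof (induction d)
    case 0 then show ?case by simp
  next
    case (Suc d)
    have "e_mt \<Theta> (Suc (\<kappa> + d)) = 0" using kappa(2) by simp
    then show ?case using Suc.IH by simp
  qed
  have stab': "k \<ge> \<kappa> \<Longrightarrow> (\<Sum>l=1..k. e_mt \<Theta> l) = (\<Sum>l=1..\<kappa>. e_mt \<Theta> l)" for k
    using stab[of "k - \<kappa>"] by simp
  show ?thesis
  proof (intro conjI allI impI)
    fix k show "gen_rk (\<lambda>ws. flat_pt (Gamma \<Theta> (k + 2) ws)) (k + 2) = CARD('m) + gen_rk (\<lambda>ws. flat_t (psi \<Theta> (k + 1) ws)) (k + 1)"
      by (rule S)
  next
    fix k :: nat assume "k \<le> \<kappa>"
    show "int (gen_rk (\<lambda>ws. flat_t (psi \<Theta> (k + 1) ws)) (k + 1)) = int CARD('m) + (\<Sum>l=1..k. e_mt \<Theta> l)"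
      by (rule P2)
  next
    fix k :: nat assume k: "\<kappa> \<le> k"
    show "int (gen_rk (\<lambda>ws. flat_t (psi \<Theta> (k + 1) ws)) (k + 1)) = int CARD('m) + (\<Sum>l=1..\<kappa>. e_mt \<Theta> l)"
      using P2[of k] stab'[OF k] by simp
  next
    fix k show "gen_rk (\<lambda>ws. flat_pt (Gamma_u \<Theta> (k + 2) ws)) (k + 2) = CARD('m) + gen_rk (\<lambda>ws. flat_t (psi_u \<Theta> (k + 1) ws)) (k + 1)"
      by (rule Su)
  next
    fix k :: nat assume "k \<le> \<kappa>"
    show "int (gen_rk (\<lambda>ws. flat_t (psi_u \<Theta> (k + 1) ws)) (k + 1)) = int CARD('m) + (\<Sum>l=1..k. e_mt \<Theta> l)"
      by (rule P2u)
  next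
    fix k :: nat assume k: "\<kappa> \<le> k"
    show "int (gen_rk (\<lambda>ws. flat_t (psi_u \<Theta> (k + 1) ws)) (k + 1)) = int CARD('m) + (\<Sum>l=1..\<kappa>. e_mt \<Theta> l)"
      using P2u[of k] stab'[OF k] by simp
  qed
qed

end
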